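(* Let $p$ be a prime, $q=p^n$, $d$ a natural number with $(d,p)=1$, and fix a nontrivial additive character $\psi$ of $\mathbb{F}_p$. For every $f\in\mathcal{F}_d$ the character $\chi_f$ is a primitive Dirichlet character modulo $x^{d+1}$; the characters $\chi_f$, $f\in\mathcal{F}_d$, are pairwise distinct; and every primitive Dirichlet character $\chi$ modulo $x^{d+1}$ with $\chi^p$ trivial is of the form $\chi=\chi_f$ for some $f\in\mathcal{F}_d$.
   Context: $\mathcal{F}_d$ denotes the set of polynomials $f=\sum_{i=0}^d a_ix^i\in\mathbb{F}_q[x]$ with $a_d\neq 0$ and $a_i=0$ for every $i\ge 0$ divisible by $p$. A Dirichlet character modulo a monic $Q\in\mathbb{F}_q[x]$ is a function $\chi:\mathbb{F}_q[x]\to\mathbb{C}$ obtained from a character of $(\mathbb{F}_q[x]/Q)^\times$ by $\chi(g)=\chi(g\bmod Q)$ if $(g,Q)=1$ and $\chi(g)=0$ otherwise; it is primitive if there is no proper monic divisor $Q_1$ of $Q$ such that $\chi(g)$ for $g$ coprime to $Q$ depends only on $g\bmod Q_1$; it is trivial if it equals $1$ on all $g$ coprime to $Q$. For $f\in\mathcal{F}_d$, $\chi_f$ is defined by: $\chi_f(g)=0$ if $x\mid g$; otherwise write $g(x)=g(0)\prod_{i=1}^k(1-\alpha_ix)$ with $\alpha_i$ in an algebraic closure of $\mathbb{F}_q$, and set $\chi_f(g)=\psi\left(\mathrm{Tr}_{\mathbb{F}_q/\mathbb{F}_p}\sum_{i=1}^kf(\alpha_i)\right)$ (here $\sum_i f(\alpha_i)\in\mathbb{F}_q$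 and depends only on $g\bmod x^{d+1}$, so $\chi_f$ is a Dirichlet character modulo $x^{d+1}$). *)

theory Defs
  imports Complex_Main "HOL-Library.Cardinality" "HOL-Algebra.Algebraic_Closure_Type"
begin

definition prime_subfield :: "'a::field set" where
  "prime_subfield = range (of_nat :: nat \<Rightarrow> 'a)"

text \<open>A nontrivial additive character of F_p (a homomorphism from (F_p,+) into the
  multiplicative group of nonzero complex numbers, not identically 1).  Only its
  values on the prime subfield matter.\<close>
definition nontrivial_add_char_Fp :: "('a::field \<Rightarrow> complex) \<Rightarrow> bool" where
  "nontrivial_add_char_Fp psi \<longleftrightarrow>
     (\<forall>x\<in>prime_subfield. psi x \<noteq> 0) \<and>
     (\<forall>x\<in>prime_subfield. \<forall>y\<in>prime_subfield. psi (x + y) = psi x * psi y) \<and>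
     (\<exists>x\<in>prime_subfield. psi x \<noteq> 1)"

definition trace_Fq :: "nat \<Rightarrow> nat \<Rightarrow> 'a::field \<Rightarrow> 'a" where
  "trace_Fq p n a = (\<Sum>i<n. a ^ (p ^ i))"

definition F_set :: "nat \<Rightarrow> nat \<Rightarrow> 'a::field poly set" where
  "F_set p d = {f. degree f = d \<and> coeff f d \<noteq> 0 \<and> (\<forall>i. p dvd i \<longrightarrow> coeff f i = 0)}"

text \<open>chi_f(g): zero if x divides g; otherwise write g(x) = g(0) prod (1 - alpha_i x)
  with alpha_i in the algebraic closure (the alpha_i are exactly the roots, with
  multiplicity, of the reflected polynomial x^k g(1/x)), and take
  psi(Tr(sum f(alpha_i))).\<close>
definition chi_f :: "('a::field \<Rightarrow> complex) \<Rightarrow> nat \<Rightarrow> nat \<Rightarrow> 'a poly \<Rightarrow> 'a poly \<Rightarrow> complex" where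
  "chi_f psi p n f g =
     (if [:0, 1:] dvd g then 0
      else psi (trace_Fq p n
             (of_ac (\<Sum>\<alpha>\<in># proots (map_poly to_ac (reflect_poly g)).
                       poly (map_poly to_ac f) \<alpha>))))"

definition dirichlet_char :: "'a::field poly \<Rightarrow> ('a poly \<Rightarrow> complex) \<Rightarrow> bool" where
  "dirichlet_char Q chi \<longleftrightarrow>
     (\<forall>g. \<not> coprime g Q \<longrightarrow> chi g = 0) \<and>
     (\<forall>g. coprime g Q \<longrightarrow> chi g \<noteq> 0) \<and>
     (\<forall>g h. g mod Q = h mod Q \<longrightarrow> chi g = chi h) \<and>
     (\<forall>g h. chi (g * h) = chi g * chi h)"

definition primitive_dirichlet_char :: "'a::field poly \<Rightarrow> ('a poly \<Rightarrow> complex) \<Rightarrow> bool" where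
  "primitive_dirichlet_char Q chi \<longleftrightarrow> dirichlet_char Q chi \<and>
     \<not> (\<exists>Q1. lead_coeff Q1 = 1 \<and> Q1 dvd Q \<and> Q1 \<noteq> Q \<and>
            (\<forall>g h. coprime g Q \<longrightarrow> coprime h Q \<longrightarrow> g mod Q1 = h mod Q1 \<longrightarrow> chi g = chi h))"

definition trivial_char :: "'a::field poly \<Rightarrow> ('a poly \<Rightarrow> complex) \<Rightarrow> bool" where
  "trivial_char Q chi \<longleftrightarrow> (\<forall>g. coprime g Q \<longrightarrow> chi g = 1)"

end

theory Submission
  imports Defs "HOL-Number_Theory.Residues"
begin

function pw :: "'a::field poly \<Rightarrow> nat \<Rightarrow> 'a" where
  "pw g k = (if k = 0 then 0 else
     (- of_nat k * coeff g k - (\<Sum>i\<in>{1..<k}. coeff g i * pw g (k - i))) / coeff g 0)"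
  by pat_completeness auto
termination by (relation "measure snd") auto

declare pw.simps [simp del]

definition psS :: "nat \<Rightarrow> 'b::field multiset \<Rightarrow> 'b poly" where
  "psS N M = (\<Sum>k\<in>{1..N}. monom (\<Sum>a\<in>#M. a ^ k) k)"

definition linT :: "nat \<Rightarrow> 'b::field \<Rightarrow> 'b poly" where
  "linT N a = (\<Sum>k\<in>{1..N}. monom (a ^ k) k)"

lemma psS_add: "psS N (add_mset a M) = linT N a + psS N M"
  by (simp add: psS_def linT_def sum.distrib[symmetric] add_monom[symmetric])

lemma psS_empty [simp]: "psS N {#} = 0"
  by (simp add: psS_def)

lemma linT_eq: "(1 - monom a 1) * linT N a = monom a 1 - monom (a ^ Suc N) (Suc N)"
proof (induction N)
  case 0 then show ?case by (simp add: linT_def)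
next
  case (Suc N)
  have "linT (Suc N) a = linT N a + monom (a ^ Suc N) (Suc N)"
    by (simp add: linT_def)
  hence "(1 - monom a 1) * linT (Suc N) a =
     (1 - monom a 1) * linT N a + monom (a ^ Suc N) (Suc N) - monom a 1 * monom (a ^ Suc N) (Suc N)"
    by (simp add: algebra_simps)
  also have "monom a 1 * monom (a ^ Suc N) (Suc N) = monom (a ^ Suc (Suc N)) (Suc (Suc N))"
    by (simp add: mult_monom)
  finally show ?case using Suc by simp
qed

lemma key_identity:
  fixes c :: "'b::field"
  shows "monom 1 (Suc N) dvd
    (monom 1 1 * pderiv (smult c (\<Prod>a\<in>#M. 1 - monom a 1))
      + smult c (\<Prod>a\<in>#M. 1 - monom a 1) * psS N M)"
proof (induction M)
  case empty then show ?case by simp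
next
  case (add a M)
  define H where "H = smult c (\<Prod>a\<in>#M. 1 - monom a 1)"
  define L where "L = (1 - monom a 1 :: 'b poly)"
  have H': "smult c (\<Prod>a\<in>#add_mset a M. 1 - monom a 1) = L * H"
    by (simp add: H_def L_def)
  have dL: "pderiv L = - monom a 0"
    by (simp add: L_def pderiv_monom pderiv_diff one_pCons pderiv_pCons)
  have eq: "monom 1 1 * pderiv (L * H) + L * H * psS N (add_mset a M)
     = L * (monom 1 1 * pderiv H + H * psS N M) + H * (L * linT N a - monom a 1)"
    by (simp add: pderiv_mult dL psS_add algebra_simps mult_monom)
  also have "L * linT N a - monom a 1 = - monom (a ^ Suc N) (Suc N)"
    using linT_eq[of a N] by (simp add: L_def)
  also have "monom (a ^ Suc N) (Suc N) = monom 1 (Suc N) * [:a ^ Suc N:]"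
    by (simp add: monom_altdef smult_monom)
  finally have eq2: "monom 1 1 * pderiv (L * H) + L * H * psS N (add_mset a M)
     = L * (monom 1 1 * pderiv H + H * psS N M) - H * (monom 1 (Suc N) * [:a ^ Suc N:])"
    by simp
  have d1: "monom 1 (Suc N) dvd L * (monom 1 1 * pderiv H + H * psS N M)"
    by (rule dvd_mult) (use add.IH in \<open>simp add: H_def\<close>)
  have d2: "monom 1 (Suc N) dvd H * (monom 1 (Suc N) * [:a ^ Suc N:])"
    by (rule dvd_mult, rule dvd_mult2, rule dvd_refl)
  show ?case unfolding H' eq2 using d1 d2 by (rule dvd_diff)
qed

lemma aux_eq: "(a::'b::comm_ring) + (x + s) = 0 \<Longrightarrow> x = - a - s"
proof -
  assume h: "a + (x + s) = 0"
  have "x = (a + (x + s)) - a - s" by (simp add: algebra_simps)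
  thus ?thesis using h by simp
qed

lemma coeff_psS: "coeff (psS N M) m = (if 1 \<le> m \<and> m \<le> N then (\<Sum>a\<in>#M. a ^ m) else 0)"
  by (simp add: psS_def coeff_sum coeff_monom)

lemma key_coeff:
  fixes G :: "'b::field poly"
  assumes dv: "monom 1 (Suc N) dvd (monom 1 1 * pderiv G + G * psS N M)"
    and k: "1 \<le> k" "k \<le> N"
  shows "of_nat k * coeff G k + (\<Sum>i<k. coeff G i * (\<Sum>a\<in>#M. a ^ (k - i))) = 0"
proof -
  have "coeff (monom 1 1 * pderiv G + G * psS N M) k = 0"
    using dv k by (simp add: monom_1_dvd_iff')
  moreover have "coeff (monom 1 1 * pderiv G) k = of_nat k * coeff G k"
    using k by (simp add: coeff_monom_mult coeff_pderiv)
  moreover have "coeff (G * psS N M) k = (\<Sum>i<k. coeff G i * (\<Sum>a\<in>#M. a ^ (k - i)))"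
  proof -
    have "coeff (G * psS N M) k = (\<Sum>i\<le>k. coeff G i * coeff (psS N M) (k - i))"
      by (rule coeff_mult)
    also have "\<dots> = (\<Sum>i<k. coeff G i * coeff (psS N M) (k - i))"
      by (simp add: lessThan_Suc_atMost[symmetric] coeff_psS)
    also have "\<dots> = (\<Sum>i<k. coeff G i * (\<Sum>a\<in>#M. a ^ (k - i)))"
      using k by (intro sum.cong) (auto simp: coeff_psS)
    finally show ?thesis .
  qed
  ultimately show ?thesis by simp
qed

definition Rts :: "'a::field poly \<Rightarrow> 'a alg_closure multiset" where
  "Rts g = proots (map_poly to_ac (reflect_poly g))"

definition Psum :: "'a::field poly \<Rightarrow> nat \<Rightarrow> 'a alg_closure" where
  "Psum g k = (\<Sum>a\<in>#Rts g. a ^ k)"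

lemma degree_map_to_ac [simp]: "degree (map_poly to_ac q) = degree q"
  by (rule degree_map_poly) simp

lemma coeff_map_to_ac [simp]: "coeff (map_poly to_ac q) i = to_ac (coeff q i)"
  by (simp add: coeff_map_poly)

lemma map_to_ac_reflect: "reflect_poly (map_poly to_ac q) = map_poly to_ac (reflect_poly q)"
  by (rule poly_eqI) (simp add: coeff_reflect_poly)

lemma map_to_ac_mult: "map_poly to_ac (p * q) = map_poly to_ac p * map_poly to_ac q"
  by (rule poly_eqI) (simp add: coeff_mult to_ac_sum)

lemma map_to_ac_eq_0 [simp]: "map_poly to_ac q = 0 \<longleftrightarrow> q = 0"
  by (metis degree_0 coeff_map_to_ac leading_coeff_0_iff to_ac_eq_0_iff degree_map_to_ac)

lemma reflect_prod_mset: "reflect_poly (\<Prod>a\<in>#M. f a) = (\<Prod>a\<in>#M. reflect_poly (f a :: 'b::field poly))"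
  by (induction M) (simp_all add: reflect_poly_mult)

lemma reflect_lin: "reflect_poly [:-a, 1:] = 1 - monom (a::'b::field) 1"
  by (rule poly_eqI) (auto simp: coeff_reflect_poly coeff_monom coeff_pCons split: nat.splits)

lemma proots_lin_prod: "proots (\<Prod>x\<in>#B. [:-x, 1::'b::field:]) = B"
proof (induction B)
  case (add x B)
  have "proots [:-x, 1::'b:] = {#x#}" using proots_linear_factor[of "-x"] by simp
  moreover have "(\<Prod>x\<in>#B. [:-x, 1::'b:]) \<noteq> 0" by (auto simp: prod_mset_zero_iff)
  ultimately have "proots ([:-x, 1:] * (\<Prod>x\<in>#B. [:-x, 1::'b:])) = add_mset x B"
    using add by (subst proots_mult) auto
  thus ?case by simp
qed simp

lemma G_form:
  fixes g :: "'a::field poly"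
  assumes g0: "coeff g 0 \<noteq> 0"
  shows "\<exists>c. map_poly to_ac g = smult c (\<Prod>a\<in>#Rts g. 1 - monom a 1)"
proof -
  define A where "A = map_poly to_ac (reflect_poly g)"
  have "g \<noteq> 0" using g0 by auto
  hence "A \<noteq> 0" by (simp add: A_def)
  then obtain B where B: "A = smult (lead_coeff A) (\<Prod>x\<in>#B. [:-x, 1:])"
    using alg_closed_imp_factorization by blast
  have lc: "lead_coeff A \<noteq> 0" using \<open>A \<noteq> 0\<close> by simp
  have RB: "Rts g = B"
    unfolding Rts_def A_def[symmetric] using proots_lin_prod[of B] by (subst B) (simp only: proots_smult[OF lc])
  have "map_poly to_ac g = map_poly to_ac (reflect_poly (reflect_poly g))" using g0 by simp
  also have "\<dots> = reflect_poly A" by (simp add: A_def map_to_ac_reflect)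
  also have "\<dots> = smult (lead_coeff A) (\<Prod>x\<in>#B. 1 - monom x 1)"
    by (subst B) (simp add: reflect_poly_smult reflect_prod_mset reflect_lin)
  finally show ?thesis unfolding RB by blast
qed

lemma Psum_rec:
  fixes g :: "'a::field poly"
  assumes g0: "coeff g 0 \<noteq> 0" and k: "1 \<le> k"
  shows "of_nat k * to_ac (coeff g k) + (\<Sum>i<k. to_ac (coeff g i) * Psum g (k - i)) = 0"
proof -
  obtain c where G: "map_poly to_ac g = smult c (\<Prod>a\<in>#Rts g. 1 - monom a 1)"
    using G_form[OF g0] by blast
  have "monom 1 (Suc k) dvd (monom 1 1 * pderiv (map_poly to_ac g) + map_poly to_ac g * psS k (Rts g))"
    unfolding G by (rule key_identity)
  from key_coeff[OF this k order_refl] show ?thesis by (simp add: Psum_def)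
qed

lemma to_ac_pw:
  fixes g :: "'a::field poly"
  assumes g0: "coeff g 0 \<noteq> 0"
  shows "1 \<le> k \<Longrightarrow> to_ac (pw g k) = Psum g k"
proof (induction k rule: less_induct)
  case (less k)
  have IH: "to_ac (pw g (k - i)) = Psum g (k - i)" if "i \<in> {1..<k}" for i
    using that less by auto
  have rec: "of_nat k * to_ac (coeff g k) + (\<Sum>i<k. to_ac (coeff g i) * Psum g (k - i)) = 0"
    using Psum_rec[OF g0 less.prems] .
  have split: "(\<Sum>i<k. to_ac (coeff g i) * Psum g (k - i)) =
      to_ac (coeff g 0) * Psum g k + (\<Sum>i\<in>{1..<k}. to_ac (coeff g i) * Psum g (k - i))"
  proof -
    have "{..<k} = insert 0 {1..<k}" using less.prems by auto
    thus ?thesis by simp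
  qed
  have "to_ac (pw g k) = (- of_nat k * to_ac (coeff g k)
        - (\<Sum>i\<in>{1..<k}. to_ac (coeff g i) * Psum g (k - i))) / to_ac (coeff g 0)"
  proof -
    have e: "(\<Sum>i\<in>{1..<k}. to_ac (coeff g i) * to_ac (pw g (k-i))) = (\<Sum>i\<in>{1..<k}. to_ac (coeff g i) * Psum g (k-i))"
      by (rule sum.cong) (simp_all add: IH)
    show ?thesis using less.prems apply (subst pw.simps) apply (simp add: to_ac_sum)
      apply (rule disjI2) using e by simp
  qed
  also have "\<dots> = Psum g k"
  proof -
    have G0: "to_ac (coeff g 0) \<noteq> 0" using g0 by simp
    have "to_ac (coeff g 0) * Psum g k = - of_nat k * to_ac (coeff g k)
        - (\<Sum>i\<in>{1..<k}. to_ac (coeff g i) * Psum g (k - i))"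
      using aux_eq[OF rec[unfolded split]] by simp
    thus ?thesis using G0 by (simp add: divide_eq_eq mult.commute)
  qed
  finally show ?case .
qed

lemma Rts_mult:
  assumes "coeff g 0 \<noteq> 0" "coeff h 0 \<noteq> 0"
  shows "Rts (g * h) = Rts g + Rts (h :: 'a::field poly)"
proof -
  have "g \<noteq> 0" "h \<noteq> 0" using assms by auto
  thus ?thesis unfolding Rts_def
    by (simp add: reflect_poly_mult map_to_ac_mult proots_mult)
qed

lemma Psum_mult:
  assumes "coeff g 0 \<noteq> 0" "coeff h 0 \<noteq> 0"
  shows "Psum (g * h) k = Psum g k + Psum (h :: 'a::field poly) k"
  using Rts_mult[OF assms] by (simp add: Psum_def)

lemma coeff_0_mult: "coeff (g * h) 0 = coeff g 0 * coeff h (0::nat)"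
  by (simp add: coeff_mult)

lemma pw_mult:
  assumes "coeff g 0 \<noteq> 0" "coeff h 0 \<noteq> 0" "1 \<le> k"
  shows "pw (g * h) k = pw g k + pw (h :: 'a::field poly) k"
proof -
  have gh: "coeff (g * h) 0 \<noteq> 0" using assms by (simp add: coeff_0_mult)
  have "to_ac (pw (g * h) k) = to_ac (pw g k + pw h k)"
    using assms gh by (simp add: to_ac_pw Psum_mult)
  thus ?thesis by (simp only: to_ac_eq_iff)
qed

lemma pw_cong: "(\<And>i. i \<le> k \<Longrightarrow> coeff g i = coeff h i) \<Longrightarrow> pw g k = pw h k"
proof (induction k rule: less_induct)
  case (less k)
  have IH: "pw g (k - i) = pw h (k - i)" if "i \<in> {1..<k}" for i
    using that less by auto
  have s: "(\<Sum>i\<in>{1..<k}. coeff g i * pw g (k - i)) = (\<Sum>i\<in>{1..<k}. coeff h i * pw h (k - i))"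
    by (rule sum.cong) (use IH less.prems in auto)
  have "coeff g k = coeff h k" "coeff g 0 = coeff h 0" by (auto intro: less.prems)
  thus ?case
    by (subst (1 2) pw.simps) (simp only: s)
qed

lemma pw_0 [simp]: "pw g 0 = 0"
  by (simp add: pw.simps)

lemma pw_const: "pw [:c:] k = 0"
proof (induction k rule: less_induct)
  case (less k)
  have "(\<Sum>i\<in>{1..<k}. coeff [:c:] i * pw [:c:] (k - i)) = 0"
    by (rule sum.neutral) (auto simp: coeff_pCons split: nat.splits)
  thus ?case by (subst pw.simps) (auto simp: coeff_pCons split: nat.splits)
qed

lemma pw_one [simp]: "pw 1 k = 0"
  using pw_const[of 1 k] by (simp add: one_pCons)

lemma pw_lowterms:
  assumes c0: "coeff g 0 = 1" and z: "\<And>i. 0 < i \<Longrightarrow> i < k \<Longrightarrow> coeff g i = 0"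
  shows "j < k \<Longrightarrow> pw g j = 0"
proof (induction j rule: less_induct)
  case (less j)
  have "(\<Sum>i\<in>{1..<j}. coeff g i * pw g (j - i)) = 0"
    by (rule sum.neutral) (use z less in auto)
  thus ?case using less.prems z[of j] c0 by (subst pw.simps) auto
qed

lemma pw_lowterm_k:
  assumes c0: "coeff g 0 = 1" and z: "\<And>i. 0 < i \<Longrightarrow> i < k \<Longrightarrow> coeff g i = 0" and k: "1 \<le> k"
  shows "pw g k = - of_nat k * coeff g k"
proof -
  have "(\<Sum>i\<in>{1..<k}. coeff g i * pw g (k - i)) = 0"
    by (rule sum.neutral) (use z in auto)
  thus ?thesis using k c0 by (subst pw.simps) auto
qed

lemma sum_mset_sum_swap:
  "(\<Sum>a\<in>#M. \<Sum>i\<in>A. f a i) = (\<Sum>i\<in>A. \<Sum>a\<in>#M. (f a i :: 'b::comm_monoid_add))"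
  by (induction M) (simp_all add: sum.distrib)

lemma frob_sum_mset:
  assumes "prime CHAR('b::comm_semiring_1)"
  shows "(\<Sum>a\<in>#M. f a :: 'b) ^ CHAR('b) = (\<Sum>a\<in>#M. f a ^ CHAR('b))"
proof (induction M)
  case empty
  have "CHAR('b) > 0" using assms prime_gt_0_nat by blast
  then show ?case by (simp add: power_0_left)
next
  case (add x M) then show ?case using assms by (simp add: freshmans_dream)
qed

lemma X_pow: "[:0, 1::'a::field:] ^ m = monom 1 m"
  by (simp add: monom_altdef)

lemma x_dvd_iff: "[:0, 1::'a::field:] dvd g \<longleftrightarrow> coeff g 0 = 0"
  using dvd_iff_poly_eq_0[of 0 g] by (simp add: poly_0_coeff_0)

lemma dvd_coeff0: "c dvd g \<Longrightarrow> coeff g 0 \<noteq> 0 \<Longrightarrow> coeff c 0 \<noteq> (0::'a::field)"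
  by (auto elim!: dvdE simp: coeff_mult)

lemma unit_of_dvd_X_pow: "c dvd [:0, 1::'a::field:] ^ m \<Longrightarrow> coeff c 0 \<noteq> 0 \<Longrightarrow> is_unit c"
proof (induction m arbitrary: c)
  case 0 then show ?case by simp
next
  case (Suc m)
  then obtain r where r: "[:0, 1:] ^ Suc m = c * r" by (elim dvdE)
  have "coeff (c * r) 0 = 0" unfolding r[symmetric] by (simp add: coeff_pCons)
  hence "coeff r 0 = 0" using Suc.prems by (simp add: coeff_mult)
  then obtain r' where "r = [:0, 1:] * r'" using x_dvd_iff[of r] by (auto elim!: dvdE)
  hence "[:0, 1:] * [:0, 1::'a:] ^ m = [:0, 1:] * (c * r')" using r by (simp add: algebra_simps)
  hence "[:0, 1::'a:] ^ m = c * r'" by (subst (asm) mult_cancel_left) simp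
  hence "c dvd [:0, 1::'a:] ^ m" by simp
  thus ?case using Suc by blast
qed

lemma coprime_X_pow:
  assumes "0 < m"
  shows "coprime g ([:0, 1::'a::field:] ^ m) \<longleftrightarrow> coeff g 0 \<noteq> 0"
proof
  assume c: "coprime g ([:0, 1::'a::field:] ^ m)"
  show "coeff g 0 \<noteq> 0"
  proof
    assume "coeff g 0 = 0"
    hence "[:0, 1:] dvd g" by (simp add: x_dvd_iff)
    moreover have "[:0, 1::'a:] dvd [:0, 1:] ^ m" using assms by (intro dvd_power) auto
    ultimately have "is_unit [:0, 1::'a:]" by (rule coprime_common_divisor[OF c])
    thus False by (subst (asm) is_unit_iff_degree) auto
  qed
next
  assume g0: "coeff g 0 \<noteq> 0"
  show "coprime g ([:0, 1::'a::field:] ^ m)"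
  proof (rule coprimeI)
    fix c assume "c dvd g" "c dvd [:0, 1::'a:] ^ m"
    thus "is_unit c" using g0 unit_of_dvd_X_pow dvd_coeff0 by metis
  qed
qed

lemma mod_coeff:
  assumes "g mod monom 1 m = h mod monom 1 m" "i < m"
  shows "coeff g i = coeff (h :: 'a::field poly) i"
proof -
  have "monom 1 m dvd g - h" using assms(1) by (simp add: mod_eq_dvd_iff)
  hence "coeff (g - h) i = 0" using assms(2) by (simp add: monom_1_dvd_iff')
  thus ?thesis by simp
qed

lemma coeff_eq_mod:
  assumes "\<And>i. i < m \<Longrightarrow> coeff g i = coeff (h :: 'a::field poly) i"
  shows "g mod monom 1 m = h mod monom 1 m"
proof -
  have "monom 1 m dvd g - h" using assms by (simp add: monom_1_dvd_iff')
  thus ?thesis by (simp add: mod_eq_dvd_iff)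
qed

lemma divisor_X_pow:
  assumes lc: "lead_coeff Q1 = 1" and dv: "Q1 dvd [:0, 1::'a::field:] ^ Suc d"
    and ne: "Q1 \<noteq> [:0, 1:] ^ Suc d"
  shows "Q1 dvd [:0, 1:] ^ d"
proof -
  obtain R where R: "[:0, 1::'a:] ^ Suc d = Q1 * R" using dv by (elim dvdE)
  show ?thesis
  proof (cases "coeff R 0 = 0")
    case True
    then obtain R' where "R = [:0, 1:] * R'" using x_dvd_iff[of R] by (auto elim!: dvdE)
    hence "[:0, 1:] * [:0, 1::'a:] ^ d = [:0, 1:] * (Q1 * R')" using R by (simp add: algebra_simps)
    hence "[:0, 1::'a:] ^ d = Q1 * R'" by (subst (asm) mult_cancel_left) simp
    thus ?thesis by simp
  next
    case False
    have "R dvd [:0, 1::'a:] ^ Suc d" using R by simp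
    hence u: "is_unit R" using False by (rule unit_of_dvd_X_pow)
    hence R0: "R \<noteq> 0" by auto
    hence "degree R = 0" using u by (simp add: is_unit_iff_degree)
    then obtain c where c1: "R = [:c:]" by (elim degree_eq_zeroE)
    hence c: "R = [:c:]" "c \<noteq> 0" using R0 by auto
    have "lead_coeff ([:0, 1::'a:] ^ Suc d) = 1" by (simp add: lead_coeff_power)
    hence "lead_coeff (Q1 * R) = 1" unfolding R .
    hence "c = 1" using lc c by (simp add: lead_coeff_mult)
    hence "Q1 = [:0, 1:] ^ Suc d" using R c by simp
    thus ?thesis using ne by simp
  qed
qed

lemma geom_inverse:
  fixes g :: "'a::field poly"
  assumes g0: "coeff g 0 \<noteq> 0"
  shows "\<exists>u. monom 1 m dvd g * u - 1"
proof -
  define c where "c = coeff g 0"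
  have c0: "c \<noteq> 0" using g0 by (simp add: c_def)
  define s where "s = smult (- inverse c) (g - [:c:])"
  have g_eq: "g = smult c (1 - s)"
    using c0 by (simp add: s_def smult_diff_right one_pCons)
  have xs: "[:0, 1:] dvd s"
    by (simp add: x_dvd_iff s_def c_def)
  define u where "u = smult (inverse c) (\<Sum>i<m. s ^ i)"
  have "g * u = (1 - s) * (\<Sum>i<m. s ^ i)"
    using c0 by (simp add: g_eq u_def)
  also have "\<dots> = 1 - s ^ m" by (simp add: one_diff_power_eq)
  finally have "g * u - 1 = - (s ^ m)" by simp
  moreover have "[:0, 1:] ^ m dvd s ^ m" using xs by (rule dvd_power_same)
  ultimately have "monom 1 m dvd g * u - 1" by (simp add: X_pow[symmetric])
  thus ?thesis by blast
qed



locale L10 =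
  fixes p n :: nat and psi :: "'a::{field,finite} \<Rightarrow> complex"
  assumes prime_p: "prime p" and card_a: "CARD('a) = p ^ n"
    and psi_char: "nontrivial_add_char_Fp psi"
begin

lemma p_gt1: "p > 1" using prime_p prime_gt_1_nat by blast

lemma CHAR_a: "CHAR('a) = p"
proof -
  have "CHAR('a) > 0" by (simp add: finite_imp_CHAR_pos)
  hence pc: "prime CHAR('a)" using prime_CHAR_semidom by blast
  have "CHAR('a) dvd p ^ n" using CHAR_dvd_CARD[where 'a='a] card_a by simp
  hence "CHAR('a) dvd p" using pc prime_dvd_power by blast
  thus ?thesis using pc prime_p by (simp add: primes_dvd_imp_eq)
qed

lemma of_nat_p [simp]: "of_nat p = (0::'a)"
  using of_nat_CHAR[where 'a='a] CHAR_a by simp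

lemma n_pos: "n > 0"
proof (rule ccontr)
  assume "\<not> n > 0" hence "CARD('a) = 1" using card_a by simp
  moreover have "CARD('a) \<ge> 2"
  proof -
    have "{0::'a, 1} \<subseteq> UNIV" by simp
    hence "card {0::'a,1} \<le> CARD('a)" by (intro card_mono) auto
    thus ?thesis by simp
  qed
  ultimately show False by simp
qed

lemma frob_add: "(x + y :: 'a) ^ p = x ^ p + y ^ p"
  by (rule freshmans_dream) (auto simp: CHAR_a prime_p)

lemma frob_sum: "(sum f A :: 'a) ^ p = sum (\<lambda>i. f i ^ p) A"
  by (rule freshmans_dream_sum) (auto simp: CHAR_a prime_p)

lemma frob_add': "(x + y :: 'a) ^ (p ^ k) = x ^ (p ^ k) + y ^ (p ^ k)"
  by (rule freshmans_dream') (auto simp: CHAR_a prime_p)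

lemma power_card: "(x::'a) ^ CARD('a) = x"
proof (cases "x = 0")
  case False
  have "x * (\<Prod>y\<in>UNIV-{0}. x * y) = x * x ^ (card (UNIV :: 'a set) - 1) * \<Prod>(UNIV-{0})"
    by (simp add: prod.distrib mult_ac)
  also have "x * x ^ (card (UNIV :: 'a set) - 1) = x ^ Suc (card (UNIV :: 'a set) - 1)"
    by (subst power_Suc) auto
  also have "Suc (card (UNIV :: 'a set) - 1) = card (UNIV :: 'a set)"
    using finite_UNIV_card_ge_0[where ?'a = 'a] by simp
  also have "(\<Prod>y\<in>UNIV-{0}. x * y) = (\<Prod>y\<in>UNIV-{0}. y)"
    by (rule prod.reindex_bij_witness[of _ "\<lambda>y. y / x" "\<lambda>y. x * y"]) (use False in auto)
  finally show ?thesis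
    by simp
qed (use finite_UNIV_card_ge_0[where ?'a = 'a] in auto)

lemma power_q: "(x::'a) ^ (p ^ n) = x"
  using power_card card_a by simp

lemma of_nat_mod_p: "(of_nat m :: 'a) = of_nat (m mod p)"
proof -
  have "(of_nat m :: 'a) = of_nat (m div p * p + m mod p)" by simp
  also have "\<dots> = of_nat (m mod p)" by (simp only: of_nat_add of_nat_mult of_nat_p) simp
  finally show ?thesis .
qed

lemma Fp_eq: "prime_subfield = (of_nat ` {..<p} :: 'a set)"
  unfolding prime_subfield_def
proof
  show "range of_nat \<subseteq> (of_nat ` {..<p} :: 'a set)"
  proof
    fix y :: 'a assume "y \<in> range of_nat"
    then obtain m where "y = of_nat m" by auto
    hence "y = of_nat (m mod p)" using of_nat_mod_p by simp
    moreover have "m mod p < p" using p_gt1 by simp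
    ultimately show "y \<in> of_nat ` {..<p}" by auto
  qed
qed auto

lemma inj_of_nat_p: "inj_on (of_nat :: nat \<Rightarrow> 'a) {..<p}"
proof
  fix a b assume ab: "a \<in> {..<p}" "b \<in> {..<p}" "(of_nat a :: 'a) = of_nat b"
  hence "[a = b] (mod CHAR('a))" using of_nat_eq_iff_cong_CHAR by blast
  thus "a = b" using ab CHAR_a by (simp add: cong_def)
qed

lemma card_Fp: "card (prime_subfield :: 'a set) = p"
  using Fp_eq inj_of_nat_p card_image by fastforce

lemma of_nat_in_Fp [simp]: "(of_nat m :: 'a) \<in> prime_subfield"
  by (simp add: prime_subfield_def)

lemma Fp_pow: "(x::'a) \<in> prime_subfield \<Longrightarrow> x ^ p = x"
proof -
  have "(of_nat m :: 'a) ^ p = of_nat m" for m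
  proof (induction m)
    case 0 then show ?case using p_gt1 by simp
  next
    case (Suc m) then show ?case by (simp add: frob_add)
  qed
  thus "x \<in> prime_subfield \<Longrightarrow> x ^ p = x" by (auto simp: prime_subfield_def)
qed

lemma Fp_char: "((x::'a) \<in> prime_subfield) \<longleftrightarrow> x ^ p = x"
proof
  assume "x ^ p = x"
  define P :: "'a poly" where "P = monom 1 p - monom 1 1"
  have cP: "coeff P p = 1" using p_gt1 by (simp add: P_def coeff_monom)
  hence P0: "P \<noteq> 0" by auto
  have dP: "degree P \<le> p" unfolding P_def using p_gt1
    by (intro degree_diff_le) (auto simp: degree_monom_eq)
  have roots: "{y. poly P y = 0} = {y::'a. y ^ p = y}"
    by (auto simp: P_def poly_monom)
  have "prime_subfield \<subseteq> {y::'a. y ^ p = y}" using Fp_pow by auto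
  moreover have "card {y::'a. y ^ p = y} \<le> p"
    using card_poly_roots_bound[OF P0] dP roots by simp
  moreover have "card (prime_subfield::'a set) \<le> card {y::'a. y ^ p = y}"
    using \<open>prime_subfield \<subseteq> _\<close> by (intro card_mono) auto
  ultimately have "prime_subfield = {y::'a. y ^ p = y}"
    using card_Fp by (intro card_subset_eq) auto
  thus "x \<in> prime_subfield" using \<open>x ^ p = x\<close> by auto
qed (rule Fp_pow)

lemma Fp_add: "x \<in> prime_subfield \<Longrightarrow> y \<in> prime_subfield \<Longrightarrow> (x + y :: 'a) \<in> prime_subfield"
  by (simp add: Fp_char frob_add)

lemma Fp_mult: "x \<in> prime_subfield \<Longrightarrow> y \<in> prime_subfield \<Longrightarrow> (x * y :: 'a) \<in> prime_subfield"
  by (simp add: Fp_char power_mult_distrib)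

lemma Fp_uminus: "x \<in> prime_subfield \<Longrightarrow> (- x :: 'a) \<in> prime_subfield"
  using minus_power_prime_CHAR[of p x] by (simp add: Fp_char CHAR_a prime_p)

lemma Fp_diff: "x \<in> prime_subfield \<Longrightarrow> y \<in> prime_subfield \<Longrightarrow> (x - y :: 'a) \<in> prime_subfield"
  using Fp_add[of x "-y"] Fp_uminus[of y] by simp

lemma Fp_inverse: "x \<in> prime_subfield \<Longrightarrow> (inverse x :: 'a) \<in> prime_subfield"
  by (simp add: Fp_char power_inverse)

lemma Fp_divide: "x \<in> prime_subfield \<Longrightarrow> y \<in> prime_subfield \<Longrightarrow> (x / y :: 'a) \<in> prime_subfield"
  by (simp add: divide_inverse Fp_mult Fp_inverse)

lemma Fp_0 [simp]: "(0::'a) \<in> prime_subfield" and Fp_1 [simp]: "(1::'a) \<in> prime_subfield"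
  using of_nat_in_Fp[of 0] of_nat_in_Fp[of 1] by simp_all

abbreviation tr :: "'a \<Rightarrow> 'a" where "tr \<equiv> trace_Fq p n"

lemma tr_add: "tr (x + y) = tr x + tr y"
  by (simp add: trace_Fq_def frob_add' sum.distrib)

lemma tr_0 [simp]: "tr 0 = 0"
  using p_gt1 by (simp add: trace_Fq_def power_0_left)

lemma tr_uminus: "tr (- x) = - tr x"
proof -
  have "tr x + tr (-x) = 0" using tr_add[of x "-x"] by simp
  thus ?thesis by (rule minus_unique[symmetric])
qed

lemma tr_diff: "tr (x - y) = tr x - tr y"
  using tr_add[of x "-y"] tr_uminus[of y] by simp

lemma tr_sum: "tr (sum f A) = (\<Sum>i\<in>A. tr (f i))"
  by (induction A rule: infinite_finite_induct) (auto simp: tr_add)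

lemma tr_in_Fp: "tr x \<in> prime_subfield"
proof -
  have "tr x ^ p = (\<Sum>i<n. (x ^ p ^ i) ^ p)" by (simp add: trace_Fq_def frob_sum)
  also have "\<dots> = (\<Sum>i<n. x ^ p ^ Suc i)" by (simp add: power_mult[symmetric] mult.commute)
  also have "\<dots> = (\<Sum>i<Suc n. x ^ p ^ i) - x ^ p ^ 0"
    by (subst sum.lessThan_Suc_shift) simp
  also have "\<dots> = tr x" by (simp add: trace_Fq_def power_q)
  finally show ?thesis by (simp add: Fp_char)
qed

lemma Fp_pow_pk: "(c::'a) \<in> prime_subfield \<Longrightarrow> c ^ (p ^ k) = c"
proof (induction k)
  case (Suc k) then show ?case by (simp add: power_mult Fp_pow mult.commute)
qed simp

lemma tr_scale: "c \<in> prime_subfield \<Longrightarrow> tr (c * x) = c * tr x"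
  by (simp add: trace_Fq_def power_mult_distrib Fp_pow_pk sum_distrib_left)

lemma tr_exists_nonzero: "\<exists>x. tr x \<noteq> 0"
proof (rule ccontr)
  assume "\<not> (\<exists>x. tr x \<noteq> 0)"
  hence all0: "\<forall>x. tr x = 0" by simp
  define P :: "'a poly" where "P = (\<Sum>i<n. monom 1 (p ^ i))"
  have inj: "inj (\<lambda>i. p ^ i)" using p_gt1 by (simp add: inj_def power_inject_exp)
  have "coeff P (p ^ (n - 1)) = (\<Sum>i<n. if p ^ i = p ^ (n - 1) then 1 else 0)"
    by (simp add: P_def coeff_sum coeff_monom)
  also have "\<dots> = (\<Sum>i\<in>{n - 1}. 1)"
    using n_pos inj by (intro sum.mono_neutral_cong_right) (auto simp: inj_def)
  finally have "coeff P (p ^ (n - 1)) = 1" by simp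
  hence P0: "P \<noteq> 0" by auto
  have dP: "degree P \<le> p ^ (n - 1)" unfolding P_def
  proof (intro degree_sum_le)
    fix i assume "i \<in> {..<n}"
    hence "p ^ i \<le> p ^ (n - 1)" using p_gt1 by (intro power_increasing) auto
    thus "degree (monom (1::'a) (p ^ i)) \<le> p ^ (n - 1)" by (simp add: degree_monom_eq)
  qed simp
  have "poly P x = tr x" for x by (simp add: P_def poly_sum poly_monom trace_Fq_def)
  hence "{x. poly P x = 0} = UNIV" using all0 by auto
  hence "CARD('a) \<le> p ^ (n - 1)" using card_poly_roots_bound[OF P0] dP by simp
  moreover have "p ^ (n - 1) < p ^ n" using p_gt1 n_pos by (intro power_strict_increasing) auto
  ultimately show False using card_a by simp
qed

lemma tr_nondeg: "b \<noteq> 0 \<Longrightarrow> \<exists>c. tr (b * c) \<noteq> 0"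
proof -
  assume "b \<noteq> 0"
  obtain x where "tr x \<noteq> 0" using tr_exists_nonzero by blast
  hence "tr (b * (x / b)) \<noteq> 0" using \<open>b \<noteq> 0\<close> by simp
  thus ?thesis by blast
qed

lemma psi_props:
  shows psi_nz: "x \<in> prime_subfield \<Longrightarrow> psi x \<noteq> 0"
    and psi_add: "x \<in> prime_subfield \<Longrightarrow> y \<in> prime_subfield \<Longrightarrow> psi (x + y) = psi x * psi y"
  using psi_char unfolding nontrivial_add_char_Fp_def by auto

lemma psi_0 [simp]: "psi 0 = 1"
  using psi_add[of 0 0] psi_nz[of 0] by simp

lemma psi_of_nat_mult: "z \<in> prime_subfield \<Longrightarrow> psi (of_nat m * z) = psi z ^ m"
proof (induction m)
  case (Suc m)
  have "psi (of_nat (Suc m) * z) = psi (of_nat m * z + z)" by (simp add: algebra_simps)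
  also have "\<dots> = psi (of_nat m * z) * psi z" using Suc.prems by (intro psi_add Fp_mult) auto
  finally show ?case using Suc by simp
qed simp

lemma psi_eq_1: "x \<in> prime_subfield \<Longrightarrow> psi x = 1 \<Longrightarrow> x = 0"
proof (rule ccontr)
  assume x: "x \<in> prime_subfield" "psi x = 1" "x \<noteq> 0"
  obtain y where y: "y \<in> prime_subfield" "psi y \<noteq> 1"
    using psi_char unfolding nontrivial_add_char_Fp_def by auto
  have "y / x \<in> prime_subfield" using x y by (intro Fp_divide)
  then obtain m where "y / x = of_nat m" by (auto simp: prime_subfield_def)
  hence "y = of_nat m * x" using x by (simp add: field_simps)
  hence "psi y = 1" using psi_of_nat_mult[of x m] x by simp
  thus False using y by simp
qed

lemma psi_inj: "x \<in> prime_subfield \<Longrightarrow> y \<in> prime_subfield \<Longrightarrow> psi x = psi y \<Longrightarrow> x = y"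
proof -
  assume xy: "x \<in> prime_subfield" "y \<in> prime_subfield" "psi x = psi y"
  have "psi x = psi (x - y) * psi y" using xy by (metis Fp_diff diff_add_cancel psi_add)
  hence "psi (x - y) = 1" using xy psi_nz[of y] by simp
  hence "x - y = 0" using xy by (intro psi_eq_1 Fp_diff) auto
  thus "x = y" by simp
qed

lemma psi_pow_p: "x \<in> prime_subfield \<Longrightarrow> psi x ^ p = 1"
  using psi_of_nat_mult[of x p] by simp

lemma psi_onto: "z ^ p = 1 \<Longrightarrow> \<exists>x\<in>prime_subfield. psi x = z"
proof -
  assume z: "z ^ p = 1"
  define P :: "complex poly" where "P = monom 1 p - 1"
  have cP: "coeff P p = 1" using p_gt1 by (simp add: P_def coeff_monom)
  hence P0: "P \<noteq> 0" by auto
  have dP: "degree P \<le> p" unfolding P_def using p_gt1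
    by (intro degree_diff_le) (auto simp: degree_monom_eq)
  have roots: "{y. poly P y = 0} = {y::complex. y ^ p = 1}"
    by (auto simp: P_def poly_monom)
  have fin: "finite {y::complex. y ^ p = 1}" using poly_roots_finite[OF P0] roots by simp
  have sub: "psi ` prime_subfield \<subseteq> {y::complex. y ^ p = 1}" using psi_pow_p by auto
  have "card (psi ` prime_subfield) = p"
    using card_Fp psi_inj by (subst card_image) (auto simp: inj_on_def)
  moreover have "card {y::complex. y ^ p = 1} \<le> p"
    using card_poly_roots_bound[OF P0] dP roots by simp
  moreover have "card (psi ` prime_subfield) \<le> card {y::complex. y ^ p = 1}"
    using fin sub by (intro card_mono)
  ultimately have "psi ` prime_subfield = {y::complex. y ^ p = 1}"
    using fin sub by (intro card_subset_eq) auto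
  hence "z \<in> psi ` prime_subfield" using z by simp
  thus ?thesis by blast
qed

lemma F_setD:
  assumes "f \<in> (F_set p d :: 'a poly set)"
  shows "degree f = d" "coeff f d \<noteq> 0" "coeff f 0 = 0" "\<And>i. p dvd i \<Longrightarrow> coeff f i = 0"
  using assms by (auto simp: F_set_def)

lemma chi_f_eq:
  assumes f: "f \<in> (F_set p d :: 'a poly set)" and g0: "coeff g 0 \<noteq> 0"
  shows "chi_f psi p n f g = psi (tr (\<Sum>k\<in>{1..d}. coeff f k * pw g k))"
proof -
  have nd: "\<not> [:0, 1:] dvd g" using g0 by (simp add: x_dvd_iff)
  have "(\<Sum>a\<in># proots (map_poly to_ac (reflect_poly g)). poly (map_poly to_ac f) a)
      = (\<Sum>a\<in>#Rts g. \<Sum>i\<le>d. to_ac (coeff f i) * a ^ i)"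
    using F_setD(1)[OF f] by (simp add: Rts_def poly_altdef)
  also have "\<dots> = (\<Sum>i\<le>d. to_ac (coeff f i) * Psum g i)"
    by (simp add: sum_mset_sum_swap Psum_def sum_mset_distrib_left)
  also have "\<dots> = (\<Sum>i\<in>{1..d}. to_ac (coeff f i) * Psum g i)"
  proof -
    have "{..d} = insert 0 {1..d}" by auto
    thus ?thesis using F_setD(3)[OF f] by simp
  qed
  also have "\<dots> = to_ac (\<Sum>k\<in>{1..d}. coeff f k * pw g k)"
    by (simp add: to_ac_sum to_ac_pw[OF g0])
  finally show ?thesis using nd by (simp add: chi_f_def)
qed

lemma CHAR_ac: "CHAR('a alg_closure) = p"
  by (simp add: CHAR_a)

lemma pw_frob:
  assumes g0: "coeff (g :: 'a poly) 0 \<noteq> 0" and m: "1 \<le> m"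
  shows "pw g (p * m) = pw g m ^ p"
proof -
  have pm: "1 \<le> p * m" using m p_gt1 by simp
  have "to_ac (pw g m ^ p) = (\<Sum>a\<in>#Rts g. a ^ m) ^ CHAR('a alg_closure)"
    by (simp add: to_ac_pw[OF g0 m] Psum_def CHAR_a)
  also have "\<dots> = (\<Sum>a\<in>#Rts g. (a ^ m) ^ CHAR('a alg_closure))"
    by (rule frob_sum_mset) (simp add: CHAR_a prime_p)
  also have "\<dots> = to_ac (pw g (p * m))"
    using to_ac_pw[OF g0 pm] by (simp add: Psum_def CHAR_a power_mult[symmetric] mult.commute[of m p])
  finally show ?thesis by (simp only: to_ac_eq_iff)
qed

lemma chi_zero: "coeff g 0 = 0 \<Longrightarrow> chi_f psi p n f g = 0"
  by (simp add: chi_f_def x_dvd_iff)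

lemma chi_dirichlet:
  assumes f: "f \<in> (F_set p d :: 'a poly set)"
  shows "dirichlet_char ([:0, 1:] ^ (d + 1)) (chi_f psi p n f)"
  unfolding dirichlet_char_def
proof (intro conjI allI impI)
  fix g :: "'a poly"
  assume "\<not> coprime g ([:0, 1:] ^ (d + 1))"
  thus "chi_f psi p n f g = 0" by (intro chi_zero) (use coprime_X_pow[of "d+1" g] in simp)
next
  fix g :: "'a poly"
  assume "coprime g ([:0, 1:] ^ (d + 1))"
  hence "coeff g 0 \<noteq> 0" using coprime_X_pow[of "d+1" g] by simp
  thus "chi_f psi p n f g \<noteq> 0" by (simp add: chi_f_eq[OF f] psi_nz tr_in_Fp)
next
  fix g h :: "'a poly"
  assume "g mod [:0, 1:] ^ (d + 1) = h mod [:0, 1:] ^ (d + 1)"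
  hence gh: "g mod monom 1 (d+1) = h mod monom 1 (d+1)" by (simp only: X_pow)
  have c: "coeff g i = coeff h i" if "i \<le> d" for i
    using mod_coeff[OF gh] that by simp
  show "chi_f psi p n f g = chi_f psi p n f h"
  proof (cases "coeff g 0 = 0")
    case True
    then show ?thesis using c[of 0] by (simp add: chi_zero)
  next
    case False
    hence h0: "coeff h 0 \<noteq> 0" using c[of 0] by simp
    have "(\<Sum>k\<in>{1..d}. coeff f k * pw g k) = (\<Sum>k\<in>{1..d}. coeff f k * pw h k)"
      by (intro sum.cong refl arg_cong2[where f="(*)"] pw_cong) (use c in auto)
    thus ?thesis using False h0 by (simp add: chi_f_eq[OF f])
  qed
next
  fix g h :: "'a poly"
  show "chi_f psi p n f (g * h) = chi_f psi p n f g * chi_f psi p n f h"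
  proof (cases "coeff g 0 = 0 \<or> coeff h 0 = 0")
    case True
    then show ?thesis by (auto simp: chi_zero coeff_0_mult)
  next
    case False
    hence g0: "coeff g 0 \<noteq> 0" and h0: "coeff h 0 \<noteq> 0" by auto
    have gh0: "coeff (g * h) 0 \<noteq> 0" using g0 h0 by (simp add: coeff_0_mult)
    have "(\<Sum>k\<in>{1..d}. coeff f k * pw (g * h) k) =
          (\<Sum>k\<in>{1..d}. coeff f k * pw g k) + (\<Sum>k\<in>{1..d}. coeff f k * pw h k)"
      by (simp add: pw_mult[OF g0 h0] sum.distrib[symmetric] algebra_simps)
    thus ?thesis using g0 h0 gh0 by (simp add: chi_f_eq[OF f] tr_add psi_add tr_in_Fp)
  qed
qed

lemma of_nat_ndvd: "\<not> p dvd k \<Longrightarrow> (of_nat k :: 'a) \<noteq> 0"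
  using of_nat_eq_0_iff_char_dvd[where 'a='a] CHAR_a by simp

definition bump :: "'a \<Rightarrow> nat \<Rightarrow> 'a poly" where
  "bump c k = 1 + monom c k"

lemma bump_coeff0: "1 \<le> k \<Longrightarrow> coeff (bump c k) 0 = 1"
  by (simp add: bump_def coeff_monom)

lemma pw_bump_low: "1 \<le> k \<Longrightarrow> j < k \<Longrightarrow> pw (bump c k) j = 0"
  by (rule pw_lowterms) (auto simp: bump_def coeff_monom)

lemma pw_bump_k: "1 \<le> k \<Longrightarrow> pw (bump c k) k = - of_nat k * c"
  by (subst pw_lowterm_k) (auto simp: bump_def coeff_monom)

lemma chi_primitive:
  assumes f: "f \<in> (F_set p d :: 'a poly set)" and d: "coprime d p"
  shows "primitive_dirichlet_char ([:0, 1:] ^ (d + 1)) (chi_f psi p n f)"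
  unfolding primitive_dirichlet_char_def
proof (intro conjI chi_dirichlet[OF f] notI)
  assume "\<exists>Q1. lead_coeff Q1 = 1 \<and> Q1 dvd [:0, 1:] ^ (d + 1) \<and> Q1 \<noteq> [:0, 1:] ^ (d + 1) \<and>
     (\<forall>g h. coprime g ([:0, 1:] ^ (d + 1)) \<longrightarrow> coprime h ([:0, 1:] ^ (d + 1)) \<longrightarrow>
            g mod Q1 = h mod Q1 \<longrightarrow> chi_f psi p n f g = chi_f psi p n f h)"
  then obtain Q1 where Q1: "lead_coeff Q1 = 1" "Q1 dvd [:0, 1:] ^ Suc d" "Q1 \<noteq> [:0, 1:] ^ Suc d"
    and hQ: "\<And>g h. coprime g ([:0, 1:] ^ (d + 1)) \<Longrightarrow> coprime h ([:0, 1:] ^ (d + 1)) \<Longrightarrow>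
            g mod Q1 = h mod Q1 \<Longrightarrow> chi_f psi p n f g = chi_f psi p n f h"
    by auto
  have dvdd: "Q1 dvd [:0, 1:] ^ d" using divisor_X_pow[OF Q1] .
  have pd: "\<not> p dvd d"
  proof
    assume "p dvd d"
    hence "is_unit p" using coprime_common_divisor[OF d] by auto
    thus False using p_gt1 by simp
  qed
  have d1: "1 \<le> d" using pd by (cases d) auto
  have ad: "coeff f d * (- of_nat d) \<noteq> 0" using F_setD(2)[OF f] of_nat_ndvd[OF pd] by simp
  obtain c where c: "tr (coeff f d * (- of_nat d) * c) \<noteq> 0" using tr_nondeg[OF ad] by blast
  define g where "g = bump c d"
  have g0: "coeff g 0 = 1" using d1 by (simp add: g_def bump_coeff0)
  have cg: "coprime g ([:0, 1:] ^ (d + 1))" using g0 coprime_X_pow[of "d+1" g] by simp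
  have c1: "coprime (1::'a poly) ([:0, 1:] ^ (d + 1))" by simp
  have "Q1 dvd g - 1"
  proof -
    have "g - 1 = smult c ([:0, 1:] ^ d)" by (simp add: g_def bump_def monom_altdef)
    thus ?thesis using dvdd by (simp add: dvd_smult)
  qed
  hence "g mod Q1 = 1 mod Q1" by (simp add: mod_eq_dvd_iff)
  hence eq: "chi_f psi p n f g = chi_f psi p n f 1" using hQ[OF cg c1] by simp
  have s: "(\<Sum>k\<in>{1..d}. coeff f k * pw g k) = coeff f d * (- of_nat d) * c"
  proof -
    have "(\<Sum>k\<in>{1..d}. coeff f k * pw g k) = coeff f d * pw g d +
        (\<Sum>k\<in>{1..d} - {d}. coeff f k * pw g k)"
      using d1 by (subst sum.remove[of _ d]) auto
    also have "(\<Sum>k\<in>{1..d} - {d}. coeff f k * pw g k) = 0"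
      using d1 by (intro sum.neutral) (auto simp: g_def pw_bump_low)
    finally show ?thesis using d1 by (simp add: g_def pw_bump_k)
  qed
  have "chi_f psi p n f 1 = 1" by (simp add: chi_f_eq[OF f])
  moreover have "chi_f psi p n f g \<noteq> 1"
  proof
    assume "chi_f psi p n f g = 1"
    moreover have "chi_f psi p n f g = psi (tr (\<Sum>k\<in>{1..d}. coeff f k * pw g k))"
      by (rule chi_f_eq[OF f]) (simp add: g0)
    ultimately have "psi (tr (coeff f d * (- of_nat d) * c)) = 1" unfolding s by simp
    hence "tr (coeff f d * (- of_nat d) * c) = 0" using psi_eq_1 tr_in_Fp by blast
    thus False using c by simp
  qed
  ultimately show False using eq by simp
qed

lemma chi_inj:
  assumes f1: "f1 \<in> (F_set p d :: 'a poly set)" and f2: "f2 \<in> (F_set p d :: 'a poly set)"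
    and eq: "chi_f psi p n f1 = chi_f psi p n f2"
  shows "f1 = f2"
proof (rule ccontr)
  assume ne: "f1 \<noteq> f2"
  define D where "D = {k. coeff f1 k \<noteq> coeff f2 k}"
  have Dsub: "D \<subseteq> {..d}"
  proof
    fix k assume "k \<in> D"
    hence "coeff f1 k \<noteq> 0 \<or> coeff f2 k \<noteq> 0" by (auto simp: D_def)
    thus "k \<in> {..d}" using F_setD(1)[OF f1] F_setD(1)[OF f2] le_degree by fastforce
  qed
  hence finD: "finite D" by (rule finite_subset) simp
  have "D \<noteq> {}" using ne by (auto simp: D_def poly_eq_iff)
  define K where "K = Max D"
  have KD: "K \<in> D" using finD \<open>D \<noteq> {}\<close> by (simp add: K_def)
  have above: "coeff f1 j = coeff f2 j" if "K < j" for j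
    using Max_ge[OF finD, of j] that by (auto simp: K_def D_def)
  have Kd: "K \<le> d" using KD Dsub by auto
  have pK: "\<not> p dvd K" using KD F_setD(4)[OF f1] F_setD(4)[OF f2] by (auto simp: D_def)
  hence K1: "1 \<le> K" by (cases K) auto
  define b where "b = (coeff f1 K - coeff f2 K) * (- of_nat K)"
  have b0: "b \<noteq> 0" using KD of_nat_ndvd[OF pK] by (simp add: b_def D_def)
  obtain c where c: "tr (b * c) \<noteq> 0" using tr_nondeg[OF b0] by blast
  define g where "g = bump c K"
  have g0: "coeff g 0 = 1" using K1 by (simp add: g_def bump_coeff0)
  define S1 where "S1 = (\<Sum>k\<in>{1..d}. coeff f1 k * pw g k)"
  define S2 where "S2 = (\<Sum>k\<in>{1..d}. coeff f2 k * pw g k)"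
  have "psi (tr S1) = psi (tr S2)"
    using fun_cong[OF eq, of g] g0 by (simp add: chi_f_eq[OF f1] chi_f_eq[OF f2] S1_def S2_def)
  hence "tr S1 = tr S2" using psi_inj tr_in_Fp by blast
  hence "tr (S1 - S2) = 0" by (simp add: tr_diff)
  moreover have "S1 - S2 = b * c"
  proof -
    have "S1 - S2 = (\<Sum>k\<in>{1..d}. (coeff f1 k - coeff f2 k) * pw g k)"
      by (simp add: S1_def S2_def sum_subtractf[symmetric] algebra_simps)
    also have "\<dots> = (coeff f1 K - coeff f2 K) * pw g K +
        (\<Sum>k\<in>{1..d} - {K}. (coeff f1 k - coeff f2 k) * pw g k)"
      using K1 Kd by (subst sum.remove[of _ K]) auto
    also have "(\<Sum>k\<in>{1..d} - {K}. (coeff f1 k - coeff f2 k) * pw g k) = 0"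
    proof (intro sum.neutral ballI)
      fix k assume k: "k \<in> {1..d} - {K}"
      show "(coeff f1 k - coeff f2 k) * pw g k = 0"
      proof (cases "k < K")
        case True then show ?thesis using K1 by (simp add: g_def pw_bump_low)
      next
        case False then show ?thesis using k above[of k] by simp
      qed
    qed
    finally show ?thesis using K1 by (simp add: g_def pw_bump_k b_def algebra_simps)
  qed
  ultimately show False using c by simp
qed

definition subgrp :: "'a set \<Rightarrow> bool" where
  "subgrp W \<longleftrightarrow> 0 \<in> W \<and> (\<forall>x\<in>W. \<forall>y\<in>W. x + y \<in> W)"

definition HomW :: "'a set \<Rightarrow> ('a \<Rightarrow> 'a) set" where
  "HomW W = {l. (\<forall>x\<in>W. \<forall>y\<in>W. l (x + y) = l x + l y) \<and> (\<forall>x\<in>W. l x \<in> prime_subfield) \<and>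
              (\<forall>x. x \<notin> W \<longrightarrow> l x = 0)}"

lemma finite_HomW: "finite (HomW W)"
  by (rule finite_subset[of _ UNIV]) auto

lemma subgrp_of_nat_mult: "subgrp W \<Longrightarrow> x \<in> W \<Longrightarrow> of_nat m * x \<in> W"
proof (induction m)
  case (Suc m)
  hence "of_nat m * x + x \<in> W" by (auto simp: subgrp_def)
  thus ?case by (simp only: of_nat_Suc distrib_right mult_1_left add.commute)
qed (simp add: subgrp_def)

lemma subgrp_uminus: "subgrp W \<Longrightarrow> x \<in> W \<Longrightarrow> - x \<in> W"
proof -
  assume W: "subgrp W" "x \<in> W"
  have "of_nat (p - 1) * x = (of_nat p - 1) * x" using p_gt1 by (simp add: of_nat_diff)
  hence "- x = of_nat (p - 1) * x" by simp
  thus ?thesis using subgrp_of_nat_mult[OF W] by simp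
qed

lemma subgrp_diff: "subgrp W \<Longrightarrow> x \<in> W \<Longrightarrow> y \<in> W \<Longrightarrow> x - y \<in> W"
  using subgrp_uminus[of W y] by (auto simp: subgrp_def)

lemma hom_of_nat_mult:
  fixes l :: "'a \<Rightarrow> 'a"
  assumes l: "\<forall>x\<in>W. \<forall>y\<in>W. l (x + y) = l x + l y" and W: "subgrp W" "w \<in> W"
  shows "l (of_nat j * w) = of_nat j * l w"
proof (induction j)
  case 0
  have "0 \<in> W" using W(1) by (simp add: subgrp_def)
  hence "l (0 + 0) = l 0 + l 0" using l by blast
  hence "l 0 = l 0 + l 0" by (simp only: add_0_left)
  hence "l 0 + l 0 = l 0 + 0" by (rule trans[OF sym add_0_right[symmetric]])
  hence "l 0 = 0" by (rule add_left_cancel[THEN iffD1])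
  then show ?case by simp
next
  case (Suc j)
  have jw: "of_nat j * w \<in> W" using subgrp_of_nat_mult[OF W] .
  have h: "l (of_nat j * w + w) = l (of_nat j * w) + l w"
    using l W(2) jw by blast
  have eq1: "of_nat (Suc j) * w = of_nat j * w + w"
    by (simp only: of_nat_Suc distrib_right mult_1_left add.commute)
  have eq2: "of_nat (Suc j) * l w = of_nat j * l w + l w"
    by (simp only: of_nat_Suc distrib_right mult_1_left add.commute)
  have "l (of_nat (Suc j) * w) = l (of_nat j * w + w)" by (simp only: eq1)
  also have "\<dots> = l (of_nat j * w) + l w" by (rule h)
  also have "\<dots> = of_nat j * l w + l w" by (simp only: Suc.IH)
  also have "\<dots> = of_nat (Suc j) * l w" by (simp only: eq2)
  finally show ?case .
qed

lemma HomW_zero: "card (HomW {0}) \<le> 1"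
proof -
  have "HomW {0} \<subseteq> {\<lambda>x. 0}"
  proof
    fix l assume l: "l \<in> HomW {0}"
    have "l (0 + 0) = l 0 + l 0" using l by (auto simp: HomW_def)
    hence "l 0 = l 0 + l 0" by (simp only: add_0_left)
    hence "l 0 + l 0 = l 0 + 0" by (rule trans[OF sym add_0_right[symmetric]])
    hence "l 0 = 0" by (rule add_left_cancel[THEN iffD1])
    have "l x = 0" for x
    proof (cases "x = 0")
      case True thus ?thesis using \<open>l 0 = 0\<close> by simp
    next
      case False thus ?thesis using l by (simp add: HomW_def)
    qed
    hence "l = (\<lambda>x. 0)" by (intro ext)
    thus "l \<in> {\<lambda>x. 0}" by simp
  qed
  hence "card (HomW {0}) \<le> card {\<lambda>x::'a. (0::'a)}" by (intro card_mono) auto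
  thus ?thesis by simp
qed

definition ext_grp :: "'a set \<Rightarrow> 'a \<Rightarrow> 'a set" where
  "ext_grp W w = (\<lambda>(x, j). x + of_nat j * w) ` (W \<times> {..<p})"

lemma ext_grp_mem: "x \<in> W \<Longrightarrow> x + of_nat j * w \<in> ext_grp W w"
proof -
  assume x: "x \<in> W"
  have "x + of_nat j * w = x + of_nat (j mod p) * w" using of_nat_mod_p[of j] by simp
  moreover have "(x, j mod p) \<in> W \<times> {..<p}" using x p_gt1 by simp
  ultimately show ?thesis unfolding ext_grp_def by force
qed

lemma ext_grp_sub: "W \<subseteq> ext_grp W w"
  using ext_grp_mem[of _ W 0 w] by auto

lemma ext_grp_subgrp: "subgrp W \<Longrightarrow> subgrp (ext_grp W w)"
proof -
  assume W: "subgrp W"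
  show ?thesis unfolding subgrp_def
  proof (intro conjI ballI)
    show "0 \<in> ext_grp W w" using ext_grp_sub W by (auto simp: subgrp_def)
  next
    fix a b assume "a \<in> ext_grp W w" "b \<in> ext_grp W w"
    then obtain x j y k where "a = x + of_nat j * w" "b = y + of_nat k * w" "x \<in> W" "y \<in> W"
      by (auto simp: ext_grp_def)
    moreover have "x + of_nat j * w + (y + of_nat k * w) = (x + y) + of_nat (j + k) * w"
      by (simp add: algebra_simps)
    moreover have "x + y \<in> W" using W \<open>x \<in> W\<close> \<open>y \<in> W\<close> by (simp add: subgrp_def)
    ultimately have mem: "(x + y) + of_nat (j + k) * w \<in> ext_grp W w" using ext_grp_mem by blast
    have "a + b = (x + y) + of_nat (j + k) * w"
      using \<open>a = _\<close> \<open>b = _\<close> by (simp add: distrib_right add_ac)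
    thus "a + b \<in> ext_grp W w" using mem by simp
  qed
qed

lemma ext_grp_card:
  assumes W: "subgrp W" and w: "w \<notin> W"
  shows "card (ext_grp W w) = p * card W"
proof -
  have "inj_on (\<lambda>(x, j). x + of_nat j * w) (W \<times> {..<p})"
  proof (rule inj_onI, clarify)
    fix x j y k
    assume xy: "x \<in> W" "j < p" "y \<in> W" "k < p" and e: "x + of_nat j * w = y + of_nat k * (w::'a)"
    show "x = y \<and> j = k"
    proof (cases "j = k")
      case True thus ?thesis using e by simp
    next
      case False
      hence ne: "(of_nat j :: 'a) - of_nat k \<noteq> 0"
        using inj_of_nat_p xy by (auto simp: inj_on_def)
      have "(of_nat j - of_nat k) * w = y - x" using e by (simp add: algebra_simps)
      hence "w = inverse (of_nat j - of_nat k) * (y - x)" using ne by (simp add: field_simps)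
      moreover have "inverse ((of_nat j :: 'a) - of_nat k) \<in> prime_subfield"
        by (intro Fp_inverse Fp_diff) auto
      then obtain m where "inverse ((of_nat j :: 'a) - of_nat k) = of_nat m"
        by (auto simp: prime_subfield_def)
      ultimately have "w = of_nat m * (y - x)" by simp
      hence "w \<in> W" using subgrp_of_nat_mult[OF W subgrp_diff[OF W xy(3,1)]] by simp
      thus ?thesis using w by simp
    qed
  qed
  hence "card (ext_grp W w) = card (W \<times> {..<p})" unfolding ext_grp_def by (rule card_image)
  thus ?thesis by (simp add: card_cartesian_product)
qed

lemma ext_grp_hom_card:
  assumes W: "subgrp W"
  shows "card (HomW (ext_grp W w)) \<le> card (HomW W) * p"
proof -
  let ?W' = "ext_grp W w"
  define \<Phi> where "\<Phi> = (\<lambda>l::'a\<Rightarrow>'a. ((\<lambda>x. if x \<in> W then l x else 0), l w))"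
  have W': "subgrp ?W'" using ext_grp_subgrp[OF W] .
  have wW': "w \<in> ?W'" using ext_grp_mem[of 0 W 1 w] W by (simp add: subgrp_def)
  have maps: "\<Phi> ` HomW ?W' \<subseteq> HomW W \<times> prime_subfield"
  proof (rule image_subsetI)
    fix l assume l: "l \<in> HomW ?W'"
    have la: "\<forall>x\<in>?W'. \<forall>y\<in>?W'. l (x + y) = l x + l y" and lv: "\<forall>x\<in>?W'. l x \<in> prime_subfield"
      using l by (simp_all add: HomW_def)
    have sub: "W \<subseteq> ?W'" by (rule ext_grp_sub)
    have Wc: "\<forall>x\<in>W. \<forall>y\<in>W. x + y \<in> W" using W by (simp add: subgrp_def)
    have "(\<lambda>x. if x \<in> W then l x else 0) \<in> HomW W"
      unfolding HomW_def using la lv sub Wc by auto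
    moreover have "l w \<in> prime_subfield" using lv wW' by blast
    ultimately show "\<Phi> l \<in> HomW W \<times> prime_subfield" by (simp add: \<Phi>_def)
  qed
  have inj: "inj_on \<Phi> (HomW ?W')"
  proof (rule inj_onI)
    fix l1 l2 assume l1: "l1 \<in> HomW ?W'" and l2: "l2 \<in> HomW ?W'" and e: "\<Phi> l1 = \<Phi> l2"
    have fe: "(\<lambda>x. if x \<in> W then l1 x else 0) = (\<lambda>x. if x \<in> W then l2 x else 0)"
      using e by (simp add: \<Phi>_def)
    have eW: "l1 x = l2 x" if "x \<in> W" for x
      using fun_cong[OF fe, of x] that by simp
    have ew: "l1 w = l2 w" using e unfolding \<Phi>_def by simp
    show "l1 = l2"
    proof
      fix z show "l1 z = l2 z"
      proof (cases "z \<in> ?W'")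
        case False thus ?thesis using l1 l2 by (simp add: HomW_def)
      next
        case True
        then obtain x j where z: "z = x + of_nat j * w" "x \<in> W" by (auto simp: ext_grp_def)
        have xW': "x \<in> ?W'" using z ext_grp_sub by auto
        have jw: "of_nat j * w \<in> ?W'" using subgrp_of_nat_mult[OF W' wW'] .
        have h1: "\<forall>x\<in>?W'. \<forall>y\<in>?W'. l1 (x + y) = l1 x + l1 y" using l1 by (simp add: HomW_def)
        have h2: "\<forall>x\<in>?W'. \<forall>y\<in>?W'. l2 (x + y) = l2 x + l2 y" using l2 by (simp add: HomW_def)
        have "l1 z = l1 x + of_nat j * l1 w"
          using h1 xW' jw hom_of_nat_mult[OF h1 W' wW'] z by simp
        moreover have "l2 z = l2 x + of_nat j * l2 w"
          using h2 xW' jw hom_of_nat_mult[OF h2 W' wW'] z by simp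
        ultimately show ?thesis using eW[OF z(2)] ew by simp
      qed
    qed
  qed
  have "card (HomW ?W') = card (\<Phi> ` HomW ?W')" using inj by (simp add: card_image)
  also have "\<dots> \<le> card (HomW W \<times> (prime_subfield :: 'a set))"
    using maps by (intro card_mono) (auto intro: finite_HomW)
  also have "\<dots> = card (HomW W) * p" by (simp add: card_cartesian_product card_Fp)
  finally show ?thesis .
qed

lemma hom_grow: "\<exists>W. subgrp W \<and> card (HomW W) \<le> card W \<and> (W = UNIV \<or> m \<le> card W)"
proof (induction m)
  case 0
  have "subgrp {0}" by (simp add: subgrp_def)
  thus ?case using HomW_zero by (intro exI[of _ "{0}"]) auto
next
  case (Suc m)
  then obtain W where W: "subgrp W" "card (HomW W) \<le> card W" "W = UNIV \<or> m \<le> card W" by blast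
  show ?case
  proof (cases "W = UNIV")
    case True thus ?thesis using W by blast
  next
    case False
    then obtain w where w: "w \<notin> W" by blast
    have c: "card (ext_grp W w) = p * card W" using ext_grp_card[OF W(1) w] .
    have cW: "card W \<ge> 1"
      using W(1) by (metis One_nat_def Suc_leI card_gt_0_iff empty_iff finite subgrp_def)
    have "card (HomW (ext_grp W w)) \<le> card (HomW W) * p" using ext_grp_hom_card[OF W(1)] .
    also have "\<dots> \<le> card W * p" using W(2) by simp
    finally have h: "card (HomW (ext_grp W w)) \<le> card (ext_grp W w)" using c by (simp add: mult.commute)
    have "Suc m \<le> card (ext_grp W w)"
    proof -
      have "m \<le> card W" using W(3) False by simp
      moreover have "1 * card W < p * card W" using p_gt1 cW by (intro mult_less_mono1) auto
      ultimately have "Suc m \<le> p * card W" by linarith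
      thus ?thesis using c by simp
    qed
    thus ?thesis using ext_grp_subgrp[OF W(1)] h by blast
  qed
qed

lemma card_HomW_UNIV: "card (HomW UNIV) \<le> CARD('a)"
proof -
  obtain W where W: "subgrp W" "card (HomW W) \<le> card W" "W = UNIV \<or> Suc CARD('a) \<le> card W"
    using hom_grow[of "Suc CARD('a)"] by blast
  have "card W \<le> CARD('a)" by (rule card_mono) auto
  hence "W = UNIV" using W(3) by simp
  thus ?thesis using W(2) by simp
qed

lemma additive_is_tr:
  assumes add: "\<And>x y. l (x + y) = l x + l y" and val: "\<And>x. l x \<in> prime_subfield"
  shows "\<exists>a. \<forall>x. l x = tr (a * x)"
proof -
  define T where "T = (\<lambda>a. \<lambda>x::'a. tr (a * x)) ` UNIV"
  have TH: "T \<subseteq> HomW UNIV"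
    by (auto simp: T_def HomW_def distrib_left tr_add tr_in_Fp)
  have "inj (\<lambda>a. \<lambda>x::'a. tr (a * x))"
  proof (rule injI)
    fix a b assume e: "(\<lambda>x::'a. tr (a * x)) = (\<lambda>x. tr (b * x))"
    show "a = b"
    proof (rule ccontr)
      assume "a \<noteq> b"
      then obtain c where "tr ((a - b) * c) \<noteq> 0" using tr_nondeg[of "a - b"] by auto
      moreover have "tr ((a - b) * c) = tr (a * c) - tr (b * c)" by (simp add: algebra_simps tr_diff)
      ultimately show False using fun_cong[OF e, of c] by simp
    qed
  qed
  hence "card T = CARD('a)" by (simp add: T_def card_image)
  moreover have "card T \<le> card (HomW UNIV)" by (rule card_mono[OF finite_HomW TH])
  ultimately have "T = HomW UNIV" using TH card_HomW_UNIV
    by (intro card_subset_eq finite_HomW) auto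
  moreover have "l \<in> HomW UNIV" using add val by (simp add: HomW_def)
  ultimately have "l \<in> T" by simp
  then obtain a where "l = (\<lambda>x. tr (a * x))" unfolding T_def by blast
  thus ?thesis by auto
qed



end

locale L10chi = L10 p n psi for p n :: nat and psi :: "'a::{field,finite} \<Rightarrow> complex" +
  fixes d :: nat and chi :: "'a poly \<Rightarrow> complex"
  assumes dp: "coprime d p"
    and prim: "primitive_dirichlet_char ([:0, 1:] ^ (d + 1)) chi"
    and triv: "trivial_char ([:0, 1:] ^ (d + 1)) (\<lambda>g. chi g ^ p)"
begin

lemma chi_dir: "dirichlet_char ([:0, 1:] ^ (d + 1)) chi"
  using prim by (simp add: primitive_dirichlet_char_def)

lemma coprimeQ: "coprime g ([:0, 1:] ^ (d + 1)) \<longleftrightarrow> coeff g 0 \<noteq> (0::'a)"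
  using coprime_X_pow[of "d+1" g] by simp

lemma chi_mult: "chi (g * h) = chi g * chi h"
  using chi_dir unfolding dirichlet_char_def by blast

lemma chi_zero': "coeff g 0 = 0 \<Longrightarrow> chi g = 0"
proof -
  assume "coeff g 0 = 0"
  hence "\<not> coprime g ([:0, 1:] ^ (d + 1))" using coprimeQ by simp
  thus ?thesis using chi_dir unfolding dirichlet_char_def by blast
qed

lemma chi_period: "(\<And>i. i \<le> d \<Longrightarrow> coeff g i = coeff h i) \<Longrightarrow> chi g = chi h"
proof -
  assume c: "\<And>i. i \<le> d \<Longrightarrow> coeff g i = coeff h i"
  have "g mod monom 1 (d + 1) = h mod monom 1 (d + 1)" by (rule coeff_eq_mod) (use c in auto)
  hence "g mod [:0, 1:] ^ (d + 1) = h mod [:0, 1:] ^ (d + 1)" by (simp only: X_pow)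
  thus ?thesis using chi_dir unfolding dirichlet_char_def by blast
qed

lemma chi_pow_p: "coeff g 0 \<noteq> 0 \<Longrightarrow> chi g ^ p = 1"
  using triv coprimeQ by (simp add: trivial_char_def)

lemma pd: "\<not> p dvd d"
proof
  assume "p dvd d"
  hence "is_unit p" using coprime_common_divisor[OF dp] by auto
  thus False using p_gt1 by simp
qed

lemma d1: "1 \<le> d" using pd by (cases d) auto

definition L :: "'a poly \<Rightarrow> 'a" where
  "L g = (if coeff g 0 \<noteq> 0 then (THE y. y \<in> prime_subfield \<and> psi y = chi g) else 0)"

lemma L_props:
  assumes g0: "coeff g 0 \<noteq> 0"
  shows "L g \<in> prime_subfield" "psi (L g) = chi g"
proof -
  obtain y where y: "y \<in> prime_subfield" "psi y = chi g" using psi_onto[OF chi_pow_p[OF g0]] by blast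
  have "(THE y. y \<in> prime_subfield \<and> psi y = chi g) = y"
    using y psi_inj by (intro the_equality) auto
  thus "L g \<in> prime_subfield" "psi (L g) = chi g" using y g0 by (simp_all add: L_def)
qed

lemma L_mult:
  assumes g0: "coeff g 0 \<noteq> 0" and h0: "coeff h 0 \<noteq> 0"
  shows "L (g * h) = L g + L h"
proof -
  have gh0: "coeff (g * h) 0 \<noteq> 0" using g0 h0 by (simp add: coeff_0_mult)
  have "psi (L g + L h) = chi (g * h)"
    using L_props[OF g0] L_props[OF h0] by (simp add: psi_add chi_mult)
  thus ?thesis using L_props[OF gh0] L_props[OF g0] L_props[OF h0]
    by (intro psi_inj Fp_add) auto
qed

lemma L_period: "coeff g 0 \<noteq> 0 \<Longrightarrow> (\<And>i. i \<le> d \<Longrightarrow> coeff g i = coeff h i) \<Longrightarrow> L g = L h"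
proof -
  assume g0: "coeff g 0 \<noteq> 0" and c: "\<And>i. i \<le> d \<Longrightarrow> coeff g i = coeff h i"
  have h0: "coeff h 0 \<noteq> 0" using g0 c[of 0] by simp
  have "psi (L g) = psi (L h)" using L_props(2)[OF g0] L_props(2)[OF h0] chi_period[OF c] by simp
  thus ?thesis using L_props(1)[OF g0] L_props(1)[OF h0] psi_inj by blast
qed

lemma L_pow: "coeff h 0 \<noteq> 0 \<Longrightarrow> L (h ^ m) = of_nat m * L h"
proof (induction m)
  case 0
  have "L (1 * 1) = L 1 + L 1" by (rule L_mult) simp_all
  hence "L 1 + L 1 = L 1 + 0" by simp
  hence "L 1 = 0" by (rule add_left_cancel[THEN iffD1])
  thus ?case by simp
next
  case (Suc m)
  have "coeff (h ^ m) 0 \<noteq> 0" using Suc.prems by (simp add: coeff_0_power)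
  hence "L (h * h ^ m) = L h + L (h ^ m)" using Suc.prems by (intro L_mult)
  thus ?case using Suc by (simp add: algebra_simps)
qed

lemma L_one: "L 1 = 0"
  using L_pow[of 1 0] by simp

definition V :: "nat set" where "V = {k. 1 \<le> k \<and> k \<le> d \<and> \<not> p dvd k}"

lemma finite_V: "finite V" by (rule finite_subset[of _ "{..d}"]) (auto simp: V_def)

lemma pw_all_zero:
  fixes g :: "'a poly"
  assumes g0: "coeff g 0 \<noteq> 0" and z: "\<forall>k\<in>V. pw g k = 0"
  shows "1 \<le> k \<Longrightarrow> k \<le> d \<Longrightarrow> pw g k = 0"
proof (induction k rule: less_induct)
  case (less k)
  show ?case
  proof (cases "p dvd k")
    case False thus ?thesis using z less.prems by (auto simp: V_def)
  next
    case True
    then obtain m where m: "k = p * m" by (elim dvdE)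
    have m1: "1 \<le> m" using less.prems m by (cases m) auto
    have "m < k" using m m1 p_gt1 by simp
    hence "pw g m = 0" using less.IH[of m] m1 less.prems by simp
    thus ?thesis using pw_frob[OF g0 m1] m p_gt1 by simp
  qed
qed

lemma coeff_zero_V:
  fixes g :: "'a poly"
  assumes g0: "coeff g 0 \<noteq> 0" and z: "\<forall>k\<in>V. pw g k = 0" and k: "k \<in> V"
  shows "coeff g k = 0"
proof -
  have k1: "1 \<le> k" "k \<le> d" "\<not> p dvd k" using k by (auto simp: V_def)
  have s: "(\<Sum>i\<in>{1..<k}. coeff g i * pw g (k - i)) = 0"
    by (rule sum.neutral) (use pw_all_zero[OF g0 z] k1 in auto)
  have "0 = pw g k" using z k by simp
  also have "\<dots> = (- of_nat k * coeff g k) / coeff g 0"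
    using k1 by (subst pw.simps) (simp add: s[simplified])
  finally have "of_nat k * coeff g k = 0" using g0 by (simp add: field_simps)
  thus ?thesis using of_nat_ndvd[OF k1(3)] by simp
qed

definition rt :: "'a \<Rightarrow> 'a" where "rt y = y ^ (p ^ (n - 1))"

lemma rt_p: "rt y ^ p = y"
proof -
  have "rt y ^ p = y ^ (p ^ (n - 1) * p)" by (simp add: rt_def power_mult)
  also have "p ^ (n - 1) * p = p ^ n" using n_pos by (simp add: power_Suc2[symmetric])
  finally show ?thesis by (simp add: power_q)
qed

lemma poly_frob_sum: "(sum f A :: 'a poly) ^ p = (\<Sum>i\<in>A. f i ^ p)"
  by (rule freshmans_dream_sum) (simp_all add: CHAR_a prime_p)

lemma kernel:
  assumes g0: "coeff g 0 \<noteq> 0" and z: "\<forall>k\<in>V. pw g k = 0"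
  shows "L g = 0"
proof -
  define h where "h = (\<Sum>j\<le>d. monom (rt (coeff g (p * j))) j)"
  have hp: "h ^ p = (\<Sum>j\<le>d. monom (coeff g (p * j)) (j * p))"
    by (simp add: h_def poly_frob_sum monom_power rt_p)
  have coeff_hp: "coeff (h ^ p) i = coeff g i" if i: "i \<le> d" for i
  proof (cases "p dvd i")
    case True
    then obtain j0 where j0: "i = p * j0" by (elim dvdE)
    have "j0 \<le> p * j0" using p_gt1 by simp
    hence j0d: "j0 \<le> d" using j0 i by linarith
    have "coeff (h ^ p) i = (\<Sum>j\<le>d. if j * p = i then coeff g (p * j) else 0)"
      by (simp add: hp coeff_sum coeff_monom)
    also have "\<dots> = (\<Sum>j\<in>{j0}. if j * p = i then coeff g (p * j) else 0)"
      using j0 j0d p_gt1 by (intro sum.mono_neutral_right) auto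
    finally show ?thesis using j0 by (simp add: mult.commute)
  next
    case False
    have "coeff (h ^ p) i = (\<Sum>j\<le>d. if j * p = i then coeff g (p * j) else 0)"
      by (simp add: hp coeff_sum coeff_monom)
    also have "\<dots> = 0" using False by (intro sum.neutral) auto
    also have "0 = coeff g i"
    proof -
      have "i \<noteq> 0"
      proof
        assume "i = 0" thus False using False by simp
      qed
      hence "i \<in> V" using i False by (auto simp: V_def)
      thus ?thesis using coeff_zero_V[OF g0 z] by simp
    qed
    finally show ?thesis .
  qed
  have h0: "coeff h 0 = rt (coeff g 0)"
  proof -
    have "coeff h 0 = (\<Sum>j\<le>d. if j = 0 then rt (coeff g (p * j)) else 0)"
      by (simp add: h_def coeff_sum coeff_monom)
    also have "\<dots> = rt (coeff g 0)" by (simp add: sum.delta)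
    finally show ?thesis .
  qed
  have h0': "coeff h 0 \<noteq> 0"
  proof
    assume "coeff h 0 = 0"
    hence "rt (coeff g 0) ^ p = 0" using h0 p_gt1 by simp
    thus False using rt_p g0 by simp
  qed
  have "coeff (h ^ p) 0 \<noteq> 0" using coeff_hp[of 0] g0 by simp
  hence "L (h ^ p) = L g" by (rule L_period) (use coeff_hp in auto)
  thus ?thesis using L_pow[OF h0', of p] by simp
qed

lemma L_eq_pw:
  fixes g g' :: "'a poly"
  assumes g0: "coeff g 0 \<noteq> 0" and g0': "coeff g' 0 \<noteq> 0" and e: "\<forall>k\<in>V. pw g k = pw g' k"
  shows "L g = L g'"
proof -
  obtain u where u: "monom 1 (d + 1) dvd g' * u - 1" using geom_inverse[OF g0'] by blast
  have cu: "coeff (g' * u) i = coeff 1 i" if "i \<le> d" for i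
  proof -
    have "coeff (g' * u - 1) i = 0" using u that by (simp add: monom_1_dvd_iff')
    thus ?thesis by simp
  qed
  have gu0: "coeff (g' * u) 0 \<noteq> 0" using cu[of 0] by simp
  have u0: "coeff u 0 \<noteq> 0" using gu0 by (simp add: coeff_0_mult)
  have pgu: "pw (g' * u) k = 0" if "k \<le> d" for k
  proof -
    have "pw (g' * u) k = pw 1 k" by (rule pw_cong) (use cu that in auto)
    thus ?thesis by simp
  qed
  have "\<forall>k\<in>V. pw (g * u) k = 0"
  proof
    fix k assume k: "k \<in> V"
    hence k1: "1 \<le> k" "k \<le> d" by (auto simp: V_def)
    have "pw (g * u) k = pw g' k + pw u k" using pw_mult[OF g0 u0 k1(1)] e k by simp
    also have "\<dots> = pw (g' * u) k" using pw_mult[OF g0' u0 k1(1)] by simp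
    finally show "pw (g * u) k = 0" using pgu[OF k1(2)] by simp
  qed
  hence "L (g * u) = 0" using g0 u0 by (intro kernel) (simp_all add: coeff_0_mult)
  hence a: "L g + L u = 0" using L_mult[OF g0 u0] by simp
  have "L (g' * u) = L 1" by (rule L_period[OF gu0]) (use cu in auto)
  hence b: "L g' + L u = 0" using L_mult[OF g0' u0] L_one by simp
  from a b show ?thesis by (metis add_right_cancel)
qed

lemma pw_surj: "\<exists>g :: 'a poly. coeff g 0 = 1 \<and> (\<forall>k\<in>V. pw g k = v k)"
proof -
  have "\<exists>g :: 'a poly. coeff g 0 = 1 \<and> (\<forall>k\<in>V. k < m \<longrightarrow> pw g k = v k)" for m
  proof (induction m)
    case 0 then show ?case by (intro exI[of _ 1]) simp
  next
    case (Suc m)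
    then obtain g :: "'a poly" where g: "coeff g 0 = 1" "\<forall>k\<in>V. k < m \<longrightarrow> pw g k = v k" by blast
    show ?case
    proof (cases "m \<in> V")
      case False
      thus ?thesis using g by (intro exI[of _ g]) (auto simp: less_Suc_eq)
    next
      case True
      hence m1: "1 \<le> m" and pm: "\<not> p dvd m" by (auto simp: V_def)
      define c where "c = (pw g m - v m) / of_nat m"
      define g' where "g' = g * bump c m"
      have b0: "coeff (bump c m) 0 = 1" using m1 by (rule bump_coeff0)
      have g'0: "coeff g' 0 = 1" using g b0 by (simp add: g'_def coeff_0_mult)
      have "\<forall>k\<in>V. k < Suc m \<longrightarrow> pw g' k = v k"
      proof (intro ballI impI)
        fix k assume k: "k \<in> V" "k < Suc m"
        have k1: "1 \<le> k" using k by (auto simp: V_def)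
        have pg': "pw g' k = pw g k + pw (bump c m) k"
          unfolding g'_def using g b0 k1 by (intro pw_mult) auto
        show "pw g' k = v k"
        proof (cases "k < m")
          case True thus ?thesis using pg' g k pw_bump_low[OF m1] by simp
        next
          case False
          hence "k = m" using k by simp
          thus ?thesis using pg' pw_bump_k[OF m1] of_nat_ndvd[OF pm] by (simp add: c_def)
        qed
      qed
      thus ?thesis using g'0 by blast
    qed
  qed
  from this[of "Suc d"] show ?thesis by (auto simp: V_def)
qed

definition lam :: "(nat \<Rightarrow> 'a) \<Rightarrow> 'a" where
  "lam v = L (SOME g. coeff g 0 \<noteq> 0 \<and> (\<forall>k\<in>V. pw g k = v k))"

lemma lam_L: "coeff g 0 \<noteq> 0 \<Longrightarrow> lam (\<lambda>k. pw g k) = L g"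
proof -
  assume g0: "coeff g 0 \<noteq> 0"
  define P where "P = (\<lambda>g'::'a poly. coeff g' 0 \<noteq> 0 \<and> (\<forall>k\<in>V. pw g' k = pw g k))"
  have "P g" using g0 by (simp add: P_def)
  hence "P (SOME g. P g)" by (rule someI)
  hence "L (SOME g. P g) = L g" unfolding P_def by (intro L_eq_pw g0) auto
  thus ?thesis by (simp add: lam_def P_def)
qed

lemma lam_cong: "(\<And>k. k \<in> V \<Longrightarrow> v k = w k) \<Longrightarrow> lam v = lam w"
proof -
  assume e: "\<And>k. k \<in> V \<Longrightarrow> v k = w k"
  have "(\<lambda>g::'a poly. coeff g 0 \<noteq> 0 \<and> (\<forall>k\<in>V. pw g k = v k)) =
        (\<lambda>g. coeff g 0 \<noteq> 0 \<and> (\<forall>k\<in>V. pw g k = w k))" using e by auto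
  thus ?thesis by (simp add: lam_def)
qed

lemma lam_rep: "\<exists>g. coeff g 0 \<noteq> 0 \<and> lam v = L g \<and> (\<forall>k\<in>V. pw g k = v k)"
proof -
  obtain g :: "'a poly" where g: "coeff g 0 = 1" "\<forall>k\<in>V. pw g k = v k" using pw_surj by blast
  have "lam v = lam (\<lambda>k. pw g k)" using g by (intro lam_cong) auto
  also have "\<dots> = L g" using g by (intro lam_L) simp
  finally have "lam v = L g" .
  thus ?thesis using g by (intro exI[of _ g]) auto
qed

lemma lam_Fp: "lam v \<in> prime_subfield"
  using lam_rep[of v] L_props(1) by auto

lemma lam_add: "lam (\<lambda>k. v k + w k) = lam v + lam w"
proof -
  obtain g where g: "coeff g 0 \<noteq> 0" "lam v = L g" "\<forall>k\<in>V. pw g k = v k" using lam_rep by blast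
  obtain h where h: "coeff h 0 \<noteq> 0" "lam w = L h" "\<forall>k\<in>V. pw h k = w k" using lam_rep by blast
  have gh0: "coeff (g * h) 0 \<noteq> 0" using g h by (simp add: coeff_0_mult)
  have "lam (\<lambda>k. v k + w k) = lam (\<lambda>k. pw (g * h) k)"
  proof (rule lam_cong)
    fix k assume k: "k \<in> V"
    hence "1 \<le> k" by (simp add: V_def)
    thus "v k + w k = pw (g * h) k" using pw_mult[OF g(1) h(1)] g(3) h(3) k by simp
  qed
  also have "\<dots> = L (g * h)" using gh0 by (rule lam_L)
  also have "\<dots> = lam v + lam w" using L_mult[OF g(1) h(1)] g h by simp
  finally show ?thesis .
qed

lemma lam_zero: "lam (\<lambda>k. 0) = 0"
proof -
  have "lam (\<lambda>k. 0 + 0) = lam (\<lambda>k. 0) + lam (\<lambda>k. 0)" by (rule lam_add)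
  hence "lam (\<lambda>k. 0) + lam (\<lambda>k. 0) = lam (\<lambda>k. 0) + 0" by simp
  thus ?thesis by (rule add_left_cancel[THEN iffD1])
qed

lemma lam_sum: "finite S \<Longrightarrow> lam (\<lambda>k. \<Sum>j\<in>S. e j k) = (\<Sum>j\<in>S. lam (e j))"
proof (induction S rule: finite_induct)
  case empty then show ?case by (simp add: lam_zero)
next
  case (insert x S)
  have "lam (\<lambda>k. \<Sum>j\<in>insert x S. e j k) = lam (\<lambda>k. e x k + (\<Sum>j\<in>S. e j k))"
    using insert by simp
  also have "\<dots> = lam (e x) + lam (\<lambda>k. \<Sum>j\<in>S. e j k)" by (rule lam_add)
  finally show ?case using insert by simp
qed

lemma L_formula: "\<exists>a. \<forall>g. coeff g 0 \<noteq> 0 \<longrightarrow> L g = tr (\<Sum>j\<in>V. a j * pw g j)"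
proof -
  define lk where "lk = (\<lambda>j y. lam (\<lambda>k. if k = j then y else 0))"
  have "\<exists>a. \<forall>y. lk j y = tr (a * y)" for j
  proof (rule additive_is_tr)
    fix x y show "lk j (x + y) = lk j x + lk j y"
    proof -
      have "lk j (x + y) = lam (\<lambda>k. (if k = j then x else 0) + (if k = j then y else 0))"
        unfolding lk_def by (rule lam_cong) simp
      thus ?thesis by (simp add: lam_add lk_def)
    qed
  next
    fix x show "lk j x \<in> prime_subfield" by (simp add: lk_def lam_Fp)
  qed
  then obtain a where a: "\<And>j y. lk j y = tr (a j * y)" by metis
  have "L g = tr (\<Sum>j\<in>V. a j * pw g j)" if g0: "coeff g 0 \<noteq> 0" for g
  proof -
    have "L g = lam (\<lambda>k. pw g k)" using lam_L[OF g0] by simp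
    also have "\<dots> = lam (\<lambda>k. \<Sum>j\<in>V. if k = j then pw g j else 0)"
      by (rule lam_cong) (simp add: finite_V)
    also have "\<dots> = (\<Sum>j\<in>V. lk j (pw g j))"
      by (subst lam_sum[OF finite_V]) (simp add: lk_def)
    also have "\<dots> = tr (\<Sum>j\<in>V. a j * pw g j)" by (simp add: a tr_sum)
    finally show ?thesis .
  qed
  thus ?thesis by blast
qed

lemma chi_is_chi_f: "\<exists>f \<in> F_set p d. chi = chi_f psi p n f"
proof -
  obtain a where a: "\<And>g. coeff g 0 \<noteq> 0 \<Longrightarrow> L g = tr (\<Sum>j\<in>V. a j * pw g j)"
    using L_formula by blast
  have chiL: "chi g = psi (tr (\<Sum>j\<in>V. a j * pw g j))" if "coeff g 0 \<noteq> 0" for g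
    using L_props(2)[OF that] a[OF that] by simp
  have dV: "d \<in> V" using d1 pd by (simp add: V_def)
  define f where "f = (\<Sum>j\<in>V. monom (a j) j)"
  have cf: "coeff f k = (if k \<in> V then a k else 0)" for k
    by (simp add: f_def coeff_sum coeff_monom finite_V)
  show ?thesis
  proof (cases "a d = 0")
    case True
    define Q1 :: "'a poly" where "Q1 = [:0, 1:] ^ d"
    have "lead_coeff Q1 = 1" by (simp add: Q1_def lead_coeff_power)
    moreover have "Q1 dvd [:0, 1:] ^ (d + 1)" unfolding Q1_def by (rule le_imp_power_dvd) simp
    moreover have "Q1 \<noteq> [:0, 1:] ^ (d + 1)"
    proof -
      have dq: "degree Q1 = d" by (simp add: Q1_def X_pow degree_monom_eq)
      have dQ: "degree ([:0, 1::'a:] ^ (d + 1)) = d + 1" by (simp only: X_pow) (simp add: degree_monom_eq)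
      show ?thesis
      proof
        assume "Q1 = [:0, 1:] ^ (d + 1)"
        hence "degree Q1 = d + 1" using dQ by (simp only:)
        thus False using dq by simp
      qed
    qed
    moreover have "\<forall>g h. coprime g ([:0, 1:] ^ (d + 1)) \<longrightarrow> coprime h ([:0, 1:] ^ (d + 1)) \<longrightarrow>
            g mod Q1 = h mod Q1 \<longrightarrow> chi g = chi h"
    proof (intro allI impI)
      fix g h :: "'a poly"
      assume cg: "coprime g ([:0, 1:] ^ (d + 1))" and ch: "coprime h ([:0, 1:] ^ (d + 1))"
        and m: "g mod Q1 = h mod Q1"
      have g0: "coeff g 0 \<noteq> 0" using cg coprimeQ by simp
      have h0: "coeff h 0 \<noteq> 0" using ch coprimeQ by simp
      have m': "g mod monom 1 d = h mod monom 1 d" using m by (simp only: Q1_def X_pow)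
      have "(\<Sum>j\<in>V. a j * pw g j) = (\<Sum>j\<in>V. a j * pw h j)"
      proof (rule sum.cong)
        fix j assume j: "j \<in> V"
        show "a j * pw g j = a j * pw h j"
        proof (cases "j = d")
          case True thus ?thesis using \<open>a d = 0\<close> by simp
        next
          case False
          hence "j < d" using j by (simp add: V_def)
          hence "pw g j = pw h j" by (intro pw_cong mod_coeff[OF m']) simp
          thus ?thesis by simp
        qed
      qed simp
      thus "chi g = chi h" using chiL[OF g0] chiL[OF h0] by simp
    qed
    ultimately have False using prim unfolding primitive_dirichlet_char_def by blast
    thus ?thesis ..
  next
    case False
    have deg: "degree f = d"
    proof (rule antisym)
      show "degree f \<le> d" by (rule degree_le) (auto simp: cf V_def)
      show "d \<le> degree f" by (rule le_degree) (use False dV in \<open>simp add: cf\<close>)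
    qed
    have fF: "f \<in> F_set p d"
      unfolding F_set_def using deg False dV by (auto simp: cf V_def)
    have "chi = chi_f psi p n f"
    proof
      fix g :: "'a poly"
      show "chi g = chi_f psi p n f g"
      proof (cases "coeff g 0 = 0")
        case True thus ?thesis by (simp add: chi_zero' chi_zero)
      next
        case False
        have "(\<Sum>k\<in>{1..d}. coeff f k * pw g k) = (\<Sum>j\<in>V. a j * pw g j)"
        proof -
          have "(\<Sum>k\<in>{1..d}. coeff f k * pw g k) = (\<Sum>k\<in>V. coeff f k * pw g k)"
            by (rule sum.mono_neutral_right) (auto simp: V_def cf)
          also have "\<dots> = (\<Sum>j\<in>V. a j * pw g j)" by (rule sum.cong) (simp_all add: cf)
          finally show ?thesis .
        qed
        thus ?thesis using chiL[OF False] chi_f_eq[OF fF False] by simp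
      qed
    qed
    thus ?thesis using fF by blast
  qed
qed



end

theorem lemma10:
  fixes p n d :: nat
    and psi :: "'a::{field, finite} \<Rightarrow> complex"
  assumes "prime p"
    and "CARD('a) = p ^ n"
    and "coprime d p"
    and "nontrivial_add_char_Fp psi"
  shows "(\<forall>f \<in> (F_set p d :: 'a poly set).
            primitive_dirichlet_char ([:0, 1:] ^ (d + 1)) (chi_f psi p n f))
       \<and> inj_on (\<lambda>f. chi_f psi p n f) (F_set p d)
       \<and> (\<forall>chi. primitive_dirichlet_char ([:0, 1:] ^ (d + 1)) chi
               \<and> trivial_char ([:0, 1:] ^ (d + 1)) (\<lambda>g. chi g ^ p)
               \<longrightarrow> (\<exists>f \<in> F_set p d. chi = chi_f psi p n f))"
proof -
  interpret L10 p n psi using assms by unfold_locales auto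
  show ?thesis
  proof (intro conjI ballI allI impI)
    fix f assume "f \<in> (F_set p d :: 'a poly set)"
    thus "primitive_dirichlet_char ([:0, 1:] ^ (d + 1)) (chi_f psi p n f)"
      using assms(3) by (rule chi_primitive)
  next
    show "inj_on (\<lambda>f. chi_f psi p n f) (F_set p d)"
      by (rule inj_onI) (erule (2) chi_inj)
  next
    fix chi :: "'a poly \<Rightarrow> complex"
    assume h: "primitive_dirichlet_char ([:0, 1:] ^ (d + 1)) chi
               \<and> trivial_char ([:0, 1:] ^ (d + 1)) (\<lambda>g. chi g ^ p)"
    interpret L10chi p n psi d chi using assms h by unfold_locales auto
    show "\<exists>f \<in> F_set p d. chi = chi_f psi p n f" by (rule chi_is_chi_f)
  qed
qed



end
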